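(* Let $\mathcal{T}=(V,A,E,f,q)$ and $\mathcal{T}'$ be decorated trees such that $\mathcal{T}'$ is obtained from $\mathcal{T}$ by one of the following four operations: (a) for an edge $e=\{v,\alpha\}$ with $v\in V$, $\alpha\in A_0$ and $q(e,v)=1$, delete $\alpha$ and $e$; (b) for an edge $e=\{v,t\}$ with $v,t\in V$, $\delta_t=1$ and $q(e,v)=1$, delete $t$ and $e$; (c) for $v\in V$ with $\delta_v=2$ and incident edges $e_1=\{u_1,v\}$, $e_2=\{v,u_2\}$, delete $v,e_1,e_2$ and add the edge $e'=\{u_1,u_2\}$ with decorations $q(e_1,u_1)$ near $u_1$ and $q(e_2,u_2)$ near $u_2$; (d) for an edge $e=\{v_1,v_2\}$ with $v_1,v_2\in V$, $q(e,v_1)=Q(e,v_2)$ and $q(e,v_2)=Q(e,v_1)$, delete $e,v_1,v_2$, add a new vertex $v$, and replace each edge $\varepsilon=\{x,v^*\}$ with $v^*\in\{v_1,v_2\}$, $x\notin\{v_1,v_2\}$ by an edge $\varepsilon'=\{x,v\}$ decorated $q(\varepsilon,x)$ near $x$ and $q(\varepsilon,v^* )$ near $v$. Then $M(\mathcal{T})=M(\mathcal{T}')$ and $F(\mathcal{T})=F(\mathcal{T}')$.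
   Context: A graph is a pair $(X_0,X_1)$ of finite sets such that each element of $X_1$ (an edge) is a $2$-element subset of $X_0$; elements of $X_0$ are cells. The valency $\delta_x$ of a cell is the number of edges containing it. A path is a tuple $(x_0,\dots,x_n)$ ($n\ge0$) of cells with $\{x_i,x_{i+1}\}$ an edge for each $i<n$, these edges pairwise distinct; a cell/edge is in the path if it is some $x_i$ / some $\{x_i,x_{i+1}\}$. The graph is a tree if any two cells $x,y$ are joined by a unique path $\gamma_{x,y}$. A decorated tree is $(V,A,E,f,q)$ with $V$ (vertices), $A$ (arrows) finite disjoint sets, $(V\cup A,E)$ a tree, every arrow of valency $1$, $f:A\to\mathbb{Z}$, $q(e,x)\in\mathbb{Z}$ for each $e\in E$, $x\in e$, with $q(e,\alpha)=1$ for $\alpha\in A$, and for each $v\in V$ and distinct edges $e,e'\ni v$, $\gcd(q(e,v),q(e',v))=1$. $A_0=\{\alpha\in A:f(\alpha)=0\}$. For $x\in V\cup A$, $e\ni x$: $Q(e,x)=\prod q(e',x)$ over edges $e'\ne e$ containing $x$ (empty product $=1$). An edge $\varepsilon$ is incident to a path $\gamma$ if it is not in $\gamma$ but contains a cell $u$ of $\gamma$; $q(\varepsilon,\gamma):=q(\varepsilon,u)$. For $v\ne\alpha$, $v\in V\cup A$, $\alpha\in A$: $x_{v,\alpha}=f(\alpha)\prod_\varepsilon q(\varepsilon,\gamma_{v,\alpha})$ over edges incident to $\gamma_{v,\alpha}$; $\hat x_{v,\alpha}$ the same with product restricted to $\varepsilon\not\ni v$. For $v\in V\cup A_0$, $N_v=\sum_{\alpha\in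 A\setminus A_0}x_{v,\alpha}$; $M(\mathcal{T})=-\sum_{v\in V\cup A_0}N_v(\delta_v-2)$. For $u\in V\cup A$, $e\ni u$: $p(u,e)=\sum\hat x_{u,\alpha}$ over $\alpha\in A\setminus A_0$ with $e$ in $\gamma_{u,\alpha}$. For $\alpha\in A\setminus A_0$ with unique edge $e_\alpha$: $F(\alpha)=\gcd(f(\alpha),p(\alpha,e_\alpha))\ge0$; $F(\mathcal{T})=\sum_{\alpha\in A\setminus A_0}F(\alpha)$. *)

theory Defs
  imports Main
begin

definition is_graph :: "'a set \<Rightarrow> 'a set set \<Rightarrow> bool" where
  "is_graph X0 X1 \<longleftrightarrow> finite X0 \<and> (\<forall>e\<in>X1. e \<subseteq> X0 \<and> card e = 2)"

definition valency :: "'a set set \<Rightarrow> 'a \<Rightarrow> nat" where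
  "valency X1 x = card {e \<in> X1. x \<in> e}"

definition path_edges :: "'a list \<Rightarrow> 'a set list" where
  "path_edges p = map (\<lambda>i. {p ! i, p ! Suc i}) [0..<length p - 1]"

definition is_path :: "'a set \<Rightarrow> 'a set set \<Rightarrow> 'a list \<Rightarrow> bool" where
  "is_path X0 X1 p \<longleftrightarrow> p \<noteq> [] \<and> set p \<subseteq> X0
     \<and> (\<forall>i < length p - 1. {p ! i, p ! Suc i} \<in> X1)
     \<and> distinct (path_edges p)"

definition is_tree :: "'a set \<Rightarrow> 'a set set \<Rightarrow> bool" where
  "is_tree X0 X1 \<longleftrightarrow> is_graph X0 X1 \<and>
     (\<forall>x\<in>X0. \<forall>y\<in>X0. \<exists>!p. is_path X0 X1 p \<and> hd p = x \<and> last p = y)"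

definition gpath :: "'a set \<Rightarrow> 'a set set \<Rightarrow> 'a \<Rightarrow> 'a \<Rightarrow> 'a list" where
  "gpath X0 X1 x y = (THE p. is_path X0 X1 p \<and> hd p = x \<and> last p = y)"

record 'a dtree =
  dV :: "'a set"
  dA :: "'a set"
  dE :: "'a set set"
  df :: "'a \<Rightarrow> int"
  dq :: "'a set \<Rightarrow> 'a \<Rightarrow> int"

definition cells :: "'a dtree \<Rightarrow> 'a set" where
  "cells T = dV T \<union> dA T"

definition val :: "'a dtree \<Rightarrow> 'a \<Rightarrow> nat" where
  "val T x = valency (dE T) x"

definition decorated_tree :: "'a dtree \<Rightarrow> bool" where
  "decorated_tree T \<longleftrightarrow>
     finite (dV T) \<and> finite (dA T) \<and> dV T \<inter> dA T = {} \<and>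
     is_tree (cells T) (dE T) \<and>
     (\<forall>\<alpha>\<in>dA T. val T \<alpha> = 1) \<and>
     (\<forall>e\<in>dE T. \<forall>\<alpha>\<in>dA T. \<alpha> \<in> e \<longrightarrow> dq T e \<alpha> = 1) \<and>
     (\<forall>v\<in>dV T. \<forall>e\<in>dE T. \<forall>e'\<in>dE T. v \<in> e \<longrightarrow> v \<in> e' \<longrightarrow> e \<noteq> e' \<longrightarrow>
        gcd (dq T e v) (dq T e' v) = 1)"

definition A0 :: "'a dtree \<Rightarrow> 'a set" where
  "A0 T = {\<alpha> \<in> dA T. df T \<alpha> = 0}"

definition gam :: "'a dtree \<Rightarrow> 'a \<Rightarrow> 'a \<Rightarrow> 'a list" where
  "gam T x y = gpath (cells T) (dE T) x y"

definition QQ :: "'a dtree \<Rightarrow> 'a set \<Rightarrow> 'a \<Rightarrow> int" where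
  "QQ T e x = (\<Prod>e'\<in>{e' \<in> dE T. x \<in> e' \<and> e' \<noteq> e}. dq T e' x)"

definition incident_edges :: "'a dtree \<Rightarrow> 'a list \<Rightarrow> 'a set set" where
  "incident_edges T p = {\<epsilon> \<in> dE T. \<epsilon> \<notin> set (path_edges p) \<and> (\<exists>u\<in>set p. u \<in> \<epsilon>)}"

definition qpath :: "'a dtree \<Rightarrow> 'a set \<Rightarrow> 'a list \<Rightarrow> int" where
  "qpath T \<epsilon> p = dq T \<epsilon> (THE u. u \<in> set p \<and> u \<in> \<epsilon>)"

definition xx :: "'a dtree \<Rightarrow> 'a \<Rightarrow> 'a \<Rightarrow> int" where
  "xx T v \<alpha> = df T \<alpha> * (\<Prod>\<epsilon>\<in>incident_edges T (gam T v \<alpha>). qpath T \<epsilon> (gam T v \<alpha>))"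

definition xhat :: "'a dtree \<Rightarrow> 'a \<Rightarrow> 'a \<Rightarrow> int" where
  "xhat T v \<alpha> = df T \<alpha> *
     (\<Prod>\<epsilon>\<in>{\<epsilon> \<in> incident_edges T (gam T v \<alpha>). v \<notin> \<epsilon>}. qpath T \<epsilon> (gam T v \<alpha>))"

definition NN :: "'a dtree \<Rightarrow> 'a \<Rightarrow> int" where
  "NN T v = (\<Sum>\<alpha>\<in>dA T - A0 T. xx T v \<alpha>)"

definition MM :: "'a dtree \<Rightarrow> int" where
  "MM T = - (\<Sum>v\<in>dV T \<union> A0 T. NN T v * (int (val T v) - 2))"

definition pp :: "'a dtree \<Rightarrow> 'a \<Rightarrow> 'a set \<Rightarrow> int" where
  "pp T u e = (\<Sum>\<alpha>\<in>{\<alpha> \<in> dA T - A0 T. e \<in> set (path_edges (gam T u \<alpha>))}. xhat T u \<alpha>)"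

definition arrow_edge :: "'a dtree \<Rightarrow> 'a \<Rightarrow> 'a set" where
  "arrow_edge T \<alpha> = (THE e. e \<in> dE T \<and> \<alpha> \<in> e)"

definition Farrow :: "'a dtree \<Rightarrow> 'a \<Rightarrow> int" where
  "Farrow T \<alpha> = gcd (df T \<alpha>) (pp T \<alpha> (arrow_edge T \<alpha>))"

definition FF :: "'a dtree \<Rightarrow> int" where
  "FF T = (\<Sum>\<alpha>\<in>dA T - A0 T. Farrow T \<alpha>)"

definition keeps_f :: "'a dtree \<Rightarrow> 'a dtree \<Rightarrow> bool" where
  "keeps_f T T' \<longleftrightarrow> (\<forall>\<alpha>\<in>dA T'. df T' \<alpha> = df T \<alpha>)"

definition keeps_q_on :: "'a set set \<Rightarrow> 'a dtree \<Rightarrow> 'a dtree \<Rightarrow> bool" where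
  "keeps_q_on S T T' \<longleftrightarrow> (\<forall>e\<in>S. \<forall>x\<in>e. dq T' e x = dq T e x)"

definition op_a :: "'a dtree \<Rightarrow> 'a dtree \<Rightarrow> bool" where
  "op_a T T' \<longleftrightarrow> (\<exists>v \<alpha>. v \<in> dV T \<and> \<alpha> \<in> A0 T \<and> {v, \<alpha>} \<in> dE T \<and> dq T {v, \<alpha>} v = 1 \<and>
      dV T' = dV T \<and> dA T' = dA T - {\<alpha>} \<and> dE T' = dE T - {{v, \<alpha>}} \<and>
      keeps_f T T' \<and> keeps_q_on (dE T') T T')"

definition op_b :: "'a dtree \<Rightarrow> 'a dtree \<Rightarrow> bool" where
  "op_b T T' \<longleftrightarrow> (\<exists>v t. v \<in> dV T \<and> t \<in> dV T \<and> {v, t} \<in> dE T \<and> val T t = 1 \<and>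
      dq T {v, t} v = 1 \<and>
      dV T' = dV T - {t} \<and> dA T' = dA T \<and> dE T' = dE T - {{v, t}} \<and>
      keeps_f T T' \<and> keeps_q_on (dE T') T T')"

definition op_c :: "'a dtree \<Rightarrow> 'a dtree \<Rightarrow> bool" where
  "op_c T T' \<longleftrightarrow> (\<exists>v u1 u2. v \<in> dV T \<and> val T v = 2 \<and>
      {u1, v} \<in> dE T \<and> {v, u2} \<in> dE T \<and> u1 \<noteq> u2 \<and>
      dV T' = dV T - {v} \<and> dA T' = dA T \<and>
      dE T' = (dE T - {{u1, v}, {v, u2}}) \<union> {{u1, u2}} \<and>
      keeps_f T T' \<and> keeps_q_on (dE T - {{u1, v}, {v, u2}}) T T' \<and>
      dq T' {u1, u2} u1 = dq T {u1, v} u1 \<and> dq T' {u1, u2} u2 = dq T {v, u2} u2)"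

definition op_d :: "'a dtree \<Rightarrow> 'a dtree \<Rightarrow> bool" where
  "op_d T T' \<longleftrightarrow> (\<exists>v1 v2 v. v1 \<in> dV T \<and> v2 \<in> dV T \<and> {v1, v2} \<in> dE T \<and>
      dq T {v1, v2} v1 = QQ T {v1, v2} v2 \<and> dq T {v1, v2} v2 = QQ T {v1, v2} v1 \<and>
      v \<notin> cells T \<and>
      dV T' = (dV T - {v1, v2}) \<union> {v} \<and> dA T' = dA T \<and>
      dE T' = {\<epsilon> \<in> dE T. v1 \<notin> \<epsilon> \<and> v2 \<notin> \<epsilon>} \<union>
              {{x, v} | x. \<exists>w\<in>{v1, v2}. {x, w} \<in> dE T \<and> x \<notin> {v1, v2}} \<and>
      keeps_f T T' \<and> keeps_q_on {\<epsilon> \<in> dE T. v1 \<notin> \<epsilon> \<and> v2 \<notin> \<epsilon>} T T' \<and>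
      (\<forall>x w. w \<in> {v1, v2} \<longrightarrow> {x, w} \<in> dE T \<longrightarrow> x \<notin> {v1, v2} \<longrightarrow>
          dq T' {x, v} x = dq T {x, w} x \<and> dq T' {x, v} v = dq T {x, w} w))"

end

theory Submission
  imports Defs
begin

lemma path_edges_zip: "path_edges p = map (\<lambda>(x,y). {x,y}) (zip p (tl p))"
  by (rule nth_equalityI) (auto simp: path_edges_def nth_tl)

lemma pe_Nil[simp]: "path_edges [] = []"
  and pe_single[simp]: "path_edges [x] = []"
  and pe_Cons2[simp]: "path_edges (x # y # zs) = {x,y} # path_edges (y # zs)"
  by (simp_all add: path_edges_zip)

lemma pe_snoc: "xs \<noteq> [] \<Longrightarrow> path_edges (xs @ [y]) = path_edges xs @ [{last xs, y}]"
proof (induction xs)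
  case Nil then show ?case by simp
next
  case (Cons a xs)
  then show ?case by (cases xs) auto
qed

lemma pe_append: "path_edges (xs @ y # ys) = path_edges (xs @ [y]) @ path_edges (y # ys)"
proof (induction xs)
  case Nil then show ?case by simp
next
  case (Cons a xs)
  then show ?case by (cases xs) auto
qed

lemma pe_rev: "path_edges (rev p) = rev (path_edges p)"
proof (induction p rule: induct_list012)
  case (3 x y zs)
  have "path_edges (rev (x # y # zs)) = path_edges (rev (y # zs) @ [x])" by simp
  also have "\<dots> = path_edges (rev (y#zs)) @ [{y, x}]" by (subst pe_snoc) auto
  finally show ?case using 3 by (simp add: insert_commute)
qed auto

lemma pe_subset: "\<epsilon> \<in> set (path_edges p) \<Longrightarrow> \<epsilon> \<subseteq> set p"
  by (induction p rule: induct_list012) auto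

lemma pe_form: "\<epsilon> \<in> set (path_edges p) \<Longrightarrow> \<exists>u w. \<epsilon> = {u,w}"
  by (induction p rule: induct_list012) auto

lemma is_path_alt: "is_path X0 X1 p \<longleftrightarrow> p \<noteq> [] \<and> set p \<subseteq> X0 \<and>
   successively (\<lambda>x y. {x,y} \<in> X1) p \<and> distinct (path_edges p)"
  unfolding is_path_def successively_conv_nth by auto

lemma pe_in: "is_path X0 X1 p \<Longrightarrow> \<epsilon> \<in> set (path_edges p) \<Longrightarrow> \<epsilon> \<in> X1"
  unfolding is_path_def path_edges_def by auto

lemma distinct_pe: "distinct p \<Longrightarrow> distinct (path_edges p)"
proof (induction p rule: induct_list012)
  case (3 x y zs)
  have "{x,y} \<notin> set (path_edges (y # zs))"
    using pe_subset 3(3) by fastforce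
  then show ?case using 3 by auto
qed auto

lemma is_path_distinctI: "p \<noteq> [] \<Longrightarrow> set p \<subseteq> X0 \<Longrightarrow> successively (\<lambda>x y. {x,y} \<in> X1) p
   \<Longrightarrow> distinct p \<Longrightarrow> is_path X0 X1 p"
  by (simp add: is_path_alt distinct_pe)

lemma is_path_rev: "is_path X0 X1 p \<Longrightarrow> is_path X0 X1 (rev p)"
  by (simp add: is_path_alt pe_rev insert_commute)

lemma pe_append3: "ys \<noteq> [] \<Longrightarrow> set (path_edges ys) \<subseteq> set (path_edges (xs @ ys @ zs))"
proof -
  assume "ys \<noteq> []"
  then obtain y ys' where ys: "ys = y # ys'" by (cases ys) auto
  have a: "set (path_edges (y # ys')) \<subseteq> set (path_edges (y # ys' @ zs))"
  proof (cases zs)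
    case (Cons z zs')
    have "path_edges ((y # ys') @ z # zs') = path_edges ((y#ys') @ [z]) @ path_edges (z # zs')"
      by (rule pe_append)
    moreover have "path_edges ((y#ys') @ [z]) = path_edges (y#ys') @ [{last (y#ys'), z}]"
      by (rule pe_snoc) simp
    ultimately show ?thesis using Cons by auto
  qed simp
  have "path_edges (xs @ y # ys' @ zs) = path_edges (xs @ [y]) @ path_edges (y # ys' @ zs)"
    by (rule pe_append)
  then show ?thesis using a ys by auto
qed

lemma is_path_sub: "is_path X0 X1 (xs @ ys @ zs) \<Longrightarrow> ys \<noteq> [] \<Longrightarrow> is_path X0 X1 ys"
proof -
  assume p: "is_path X0 X1 (xs @ ys @ zs)" and ne: "ys \<noteq> []"
  then obtain y ys' where ys: "ys = y # ys'" by (cases ys) auto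
  have d: "distinct (path_edges (xs @ ys @ zs))" using p by (simp add: is_path_alt)
  have d2: "distinct (path_edges (y # ys' @ zs))"
    using d pe_append[of xs y "ys' @ zs"] ys by simp
  have d3: "distinct (path_edges ys)"
  proof (cases zs)
    case Nil then show ?thesis using d2 ys by simp
  next
    case (Cons z zs')
    have "path_edges ((y # ys') @ z # zs') = path_edges ((y#ys') @ [z]) @ path_edges (z # zs')"
      by (rule pe_append)
    moreover have "path_edges ((y#ys') @ [z]) = path_edges (y#ys') @ [{last (y#ys'), z}]"
      by (rule pe_snoc) simp
    ultimately show ?thesis using Cons d2 ys by (metis append_Cons distinct_append)
  qed
  show ?thesis using p ne d3 by (auto simp: is_path_alt successively_append_iff)
qed

locale tree =
  fixes X0 :: "'a set" and X1 :: "'a set set"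
  assumes tr: "is_tree X0 X1"
begin

lemma graph: "is_graph X0 X1" using tr by (simp add: is_tree_def)

lemma fin0: "finite X0" using graph by (simp add: is_graph_def)

lemma edge_sub: "\<epsilon> \<in> X1 \<Longrightarrow> \<epsilon> \<subseteq> X0" using graph by (simp add: is_graph_def)

lemma edge_card: "\<epsilon> \<in> X1 \<Longrightarrow> card \<epsilon> = 2" using graph by (simp add: is_graph_def)

lemma edge_form: "\<epsilon> \<in> X1 \<Longrightarrow> \<exists>u w. u \<noteq> w \<and> \<epsilon> = {u,w}"
  using edge_card by (metis card_2_iff)

lemma edge_neq: "{u,w} \<in> X1 \<Longrightarrow> u \<noteq> w"
  using edge_card by fastforce

lemma fin1: "finite X1"
proof -
  have "X1 \<subseteq> Pow X0" using edge_sub by auto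
  then show ?thesis using fin0 finite_subset by blast
qed

lemma gpath: "x \<in> X0 \<Longrightarrow> y \<in> X0 \<Longrightarrow>
   is_path X0 X1 (gpath X0 X1 x y) \<and> hd (gpath X0 X1 x y) = x \<and> last (gpath X0 X1 x y) = y"
proof -
  assume xy: "x \<in> X0" "y \<in> X0"
  have "\<exists>!p. is_path X0 X1 p \<and> hd p = x \<and> last p = y" using tr xy unfolding is_tree_def by blast
  from theI'[OF this] show ?thesis unfolding gpath_def by blast
qed

lemma path_unique: "is_path X0 X1 p \<Longrightarrow> is_path X0 X1 q \<Longrightarrow> hd p = hd q \<Longrightarrow> last p = last q \<Longrightarrow> p = q"
proof -
  assume a: "is_path X0 X1 p" "is_path X0 X1 q" "hd p = hd q" "last p = last q"
  have "hd p \<in> X0" "last p \<in> X0" using a(1) unfolding is_path_def by auto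
  then have "\<exists>!r. is_path X0 X1 r \<and> hd r = hd p \<and> last r = last p" using tr unfolding is_tree_def by blast
  then obtain r where r: "\<forall>s. is_path X0 X1 s \<and> hd s = hd p \<and> last s = last p \<longrightarrow> s = r"
    by (elim ex1E) blast
  have "p = r" using r a by blast
  moreover have "q = r" using r a by simp
  ultimately show ?thesis by simp
qed

lemma gpath_eq: "is_path X0 X1 p \<Longrightarrow> gpath X0 X1 (hd p) (last p) = p"
proof -
  assume a: "is_path X0 X1 p"
  have "hd p \<in> X0" "last p \<in> X0" using a unfolding is_path_def by auto
  then show ?thesis using gpath path_unique a by metis
qed

lemma single_path: "x \<in> X0 \<Longrightarrow> is_path X0 X1 [x]"
  by (simp add: is_path_alt)

lemma path_distinct: "is_path X0 X1 p \<Longrightarrow> distinct p"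
proof (rule ccontr)
  assume p: "is_path X0 X1 p" and nd: "\<not> distinct p"
  then obtain xs z ys zs where d: "p = xs @ [z] @ ys @ [z] @ zs"
    using not_distinct_decomp by blast
  have "is_path X0 X1 (z # ys @ [z])"
    using is_path_sub[of X0 X1 xs "z # ys @ [z]" zs] p d by simp
  moreover have "z \<in> X0" using p d unfolding is_path_def by auto
  ultimately have "z # ys @ [z] = [z]" using path_unique single_path by fastforce
  then show False by simp
qed

lemma path_between: "is_path X0 X1 p \<Longrightarrow> u \<in> set p \<Longrightarrow> w \<in> set p \<Longrightarrow>
  \<exists>q. is_path X0 X1 q \<and> hd q = u \<and> last q = w \<and> set q \<subseteq> set p \<and> set (path_edges q) \<subseteq> set (path_edges p)"
proof -
  assume p: "is_path X0 X1 p" and u: "u \<in> set p" and w: "w \<in> set p"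
  show ?thesis
  proof (cases "u = w")
    case True
    have "u \<in> X0" using p u unfolding is_path_def by auto
    then show ?thesis using u True single_path[of u] by (intro exI[of _ "[u]"]) auto
  next
    case False
    from u obtain xs r where pr: "p = xs @ u # r" by (meson split_list)
    from w False pr have "w \<in> set xs \<or> w \<in> set r" by auto
    then show ?thesis
    proof
      assume "w \<in> set r"
      then obtain ys zs where r: "r = ys @ w # zs" by (meson split_list)
      have eq: "p = xs @ (u # ys @ [w]) @ zs" using pr r by simp
      have "is_path X0 X1 (u # ys @ [w])" using is_path_sub[of X0 X1 xs _ zs] p eq by simp
      moreover have "set (path_edges (u # ys @ [w])) \<subseteq> set (path_edges p)"
        using pe_append3[of "u # ys @ [w]" xs zs] eq by simp
      ultimately show ?thesis using eq by (intro exI[of _ "u # ys @ [w]"]) auto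
    next
      assume "w \<in> set xs"
      then obtain ys0 ys where xs: "xs = ys0 @ w # ys" by (meson split_list)
      have eq: "p = ys0 @ (w # ys @ [u]) @ r" using pr xs by simp
      have "is_path X0 X1 (w # ys @ [u])" using is_path_sub[of X0 X1 ys0 _ r] p eq by simp
      then have "is_path X0 X1 (rev (w # ys @ [u]))" by (rule is_path_rev)
      moreover have "set (path_edges (w # ys @ [u])) \<subseteq> set (path_edges p)"
        using pe_append3[of "w # ys @ [u]" ys0 r] eq by simp
      moreover have "set (path_edges (rev (w # ys @ [u]))) = set (path_edges (w#ys@[u]))"
        by (simp only: pe_rev set_rev)
      moreover have "hd (rev (w # ys @ [u])) = u" "last (rev (w # ys @ [u])) = w"
        "set (rev (w # ys @ [u])) \<subseteq> set p" using eq by auto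
      ultimately show ?thesis by blast
    qed
  qed
qed

lemma two_path: "{u,w} \<in> X1 \<Longrightarrow> is_path X0 X1 [u,w]"
  using edge_sub edge_neq by (auto simp: is_path_alt)

lemma path_edge_in: "is_path X0 X1 p \<Longrightarrow> {u,w} \<in> X1 \<Longrightarrow> u \<in> set p \<Longrightarrow> w \<in> set p \<Longrightarrow>
   {u,w} \<in> set (path_edges p)"
proof -
  assume p: "is_path X0 X1 p" and e: "{u,w} \<in> X1" and u: "u \<in> set p" and w: "w \<in> set p"
  obtain q where q: "is_path X0 X1 q" "hd q = u" "last q = w" "set (path_edges q) \<subseteq> set (path_edges p)"
    using path_between[OF p u w] by blast
  have "q = [u,w]" using path_unique[OF q(1) two_path[OF e]] q by simp
  then show ?thesis using q by auto
qed

lemma path_nbr_unique: "is_path X0 X1 p \<Longrightarrow> w \<notin> set p \<Longrightarrow> {w,u1} \<in> X1 \<Longrightarrow> {w,u2} \<in> X1 \<Longrightarrow>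
   u1 \<in> set p \<Longrightarrow> u2 \<in> set p \<Longrightarrow> u1 = u2"
proof (rule ccontr)
  assume p: "is_path X0 X1 p" and w: "w \<notin> set p" and e1: "{w,u1} \<in> X1" and e2: "{w,u2} \<in> X1"
    and u1: "u1 \<in> set p" and u2: "u2 \<in> set p" and ne: "u1 \<noteq> u2"
  obtain q where q: "is_path X0 X1 q" "hd q = u1" "last q = u2" "set q \<subseteq> set p"
    using path_between[OF p u1 u2] by blast
  have r: "is_path X0 X1 [u1, w, u2]"
    apply (rule is_path_distinctI)
    using e1 e2 edge_sub w u1 u2 ne by (auto simp: insert_commute)
  have "q = [u1,w,u2]" using path_unique[OF q(1) r] q by simp
  then show False using q w by auto
qed

lemma path_interior: "is_path X0 X1 p \<Longrightarrow> z \<in> set p \<Longrightarrow> z \<noteq> hd p \<Longrightarrow> z \<noteq> last p \<Longrightarrow>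
  \<exists>u1 u2. u1 \<noteq> u2 \<and> {u1,z} \<in> set (path_edges p) \<and> {z,u2} \<in> set (path_edges p)"
proof -
  assume p: "is_path X0 X1 p" and z: "z \<in> set p" and h: "z \<noteq> hd p" and l: "z \<noteq> last p"
  obtain xs ys where pr: "p = xs @ z # ys" using z by (meson split_list)
  have xs: "xs \<noteq> []" using h pr by auto
  have ys: "ys \<noteq> []" using l pr by auto
  have "path_edges p = path_edges xs @ [{last xs, z}] @ path_edges (z # ys)"
    using pr pe_append[of xs z ys] pe_snoc[OF xs] by simp
  moreover obtain y ys' where "ys = y # ys'" using ys by (cases ys) auto
  moreover have "distinct p" using path_distinct p by simp
  ultimately show ?thesis using pr xs
    by (intro exI[of _ "last xs"] exI[of _ "hd ys"]) auto
qed

lemma path_has_edge: "is_path X0 X1 p \<Longrightarrow> hd p \<noteq> last p \<Longrightarrow> z \<in> set p \<Longrightarrow>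
   \<exists>u. {z,u} \<in> set (path_edges p)"
proof -
  assume p: "is_path X0 X1 p" and hl: "hd p \<noteq> last p" and z: "z \<in> set p"
  obtain xs ys where pr: "p = xs @ z # ys" using z by (meson split_list)
  have pe: "path_edges p = path_edges (xs @ [z]) @ path_edges (z # ys)"
    using pr pe_append by metis
  show ?thesis
  proof (cases ys)
    case (Cons y ys')
    then show ?thesis using pe by auto
  next
    case Nil
    then have xs: "xs \<noteq> []" using hl pr by auto
    have "{last xs, z} \<in> set (path_edges p)" using pe pe_snoc[OF xs] by simp
    moreover have "{last xs, z} = {z, last xs}" by blast
    ultimately show ?thesis by metis
  qed
qed

lemma path_edges_X1: "is_path X0 X1 p \<Longrightarrow> \<epsilon> \<in> set (path_edges p) \<Longrightarrow> \<epsilon> \<in> X1"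
  by (rule pe_in)

lemma val1_edge: "valency X1 z = 1 \<Longrightarrow> \<epsilon>0 \<in> X1 \<Longrightarrow> z \<in> \<epsilon>0 \<Longrightarrow> \<epsilon> \<in> X1 \<Longrightarrow> z \<in> \<epsilon> \<Longrightarrow> \<epsilon> = \<epsilon>0"
proof -
  assume a: "valency X1 z = 1" "\<epsilon>0 \<in> X1" "z \<in> \<epsilon>0" "\<epsilon> \<in> X1" "z \<in> \<epsilon>"
  have c: "card {e \<in> X1. z \<in> e} = 1" using a(1) unfolding valency_def .
  obtain x where x: "{e \<in> X1. z \<in> e} = {x}" using card_1_singletonE[OF c] by metis
  have m: "\<epsilon>0 \<in> {e \<in> X1. z \<in> e}" "\<epsilon> \<in> {e \<in> X1. z \<in> e}" using a by auto
  have "\<epsilon>0 \<in> {x}" "\<epsilon> \<in> {x}" using m unfolding x .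
  then show ?thesis by simp
qed

lemma val2_edge: "valency X1 z = 2 \<Longrightarrow> \<epsilon>1 \<in> X1 \<Longrightarrow> z \<in> \<epsilon>1 \<Longrightarrow> \<epsilon>2 \<in> X1 \<Longrightarrow> z \<in> \<epsilon>2 \<Longrightarrow> \<epsilon>1 \<noteq> \<epsilon>2
   \<Longrightarrow> \<epsilon> \<in> X1 \<Longrightarrow> z \<in> \<epsilon> \<Longrightarrow> \<epsilon> = \<epsilon>1 \<or> \<epsilon> = \<epsilon>2"
proof -
  assume a: "valency X1 z = 2" "\<epsilon>1 \<in> X1" "z \<in> \<epsilon>1" "\<epsilon>2 \<in> X1" "z \<in> \<epsilon>2" "\<epsilon>1 \<noteq> \<epsilon>2" "\<epsilon> \<in> X1" "z \<in> \<epsilon>"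
  obtain x y where xy: "x \<in> {e \<in> X1. z \<in> e}" "y \<in> {e \<in> X1. z \<in> e}" "x \<noteq> y"
    "\<forall>w\<in>{e \<in> X1. z \<in> e}. w = x \<or> w = y"
    using a(1) unfolding valency_def card_2_iff' by blast
  have "\<epsilon>1 = x \<or> \<epsilon>1 = y" "\<epsilon>2 = x \<or> \<epsilon>2 = y" "\<epsilon> = x \<or> \<epsilon> = y" using xy(4) a by auto
  then show ?thesis using a(6) by auto
qed

lemma path_val1: "is_path X0 X1 p \<Longrightarrow> hd p \<noteq> last p \<Longrightarrow> z \<in> set p \<Longrightarrow> valency X1 z = 1 \<Longrightarrow>
  \<epsilon> \<in> X1 \<Longrightarrow> z \<in> \<epsilon> \<Longrightarrow> \<epsilon> \<subseteq> set p"
proof -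
  assume a: "is_path X0 X1 p" "hd p \<noteq> last p" "z \<in> set p" "valency X1 z = 1" "\<epsilon> \<in> X1" "z \<in> \<epsilon>"
  obtain u where u: "{z,u} \<in> set (path_edges p)" using path_has_edge a by blast
  have "\<epsilon> = {z,u}" using val1_edge[OF a(4) _ _ a(5,6)] u pe_in[OF a(1) u] by simp
  then show ?thesis using u pe_subset by blast
qed

lemma path_val2: "is_path X0 X1 p \<Longrightarrow> z \<noteq> hd p \<Longrightarrow> z \<noteq> last p \<Longrightarrow> z \<in> set p \<Longrightarrow> valency X1 z = 2 \<Longrightarrow>
  \<epsilon> \<in> X1 \<Longrightarrow> z \<in> \<epsilon> \<Longrightarrow> \<epsilon> \<subseteq> set p"
proof -
  assume a: "is_path X0 X1 p" "z \<noteq> hd p" "z \<noteq> last p" "z \<in> set p" "valency X1 z = 2" "\<epsilon> \<in> X1" "z \<in> \<epsilon>"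
  obtain u1 u2 where u: "u1 \<noteq> u2" "{u1,z} \<in> set (path_edges p)" "{z,u2} \<in> set (path_edges p)"
    using path_interior a by blast
  have ne: "{u1,z} \<noteq> {z,u2}" using u(1) by (metis doubleton_eq_iff)
  have "\<epsilon> = {u1,z} \<or> \<epsilon> = {z,u2}"
    using val2_edge[OF a(5) _ _ _ _ ne a(6,7)] pe_in[OF a(1)] u by auto
  then show ?thesis using u pe_subset by blast
qed

end

definition incS :: "'a dtree \<Rightarrow> 'a set \<Rightarrow> 'a set set" where
  "incS T P = {\<epsilon> \<in> dE T. \<epsilon> \<inter> P \<noteq> {} \<and> \<not> \<epsilon> \<subseteq> P}"

definition pt :: "'a set \<Rightarrow> 'a set \<Rightarrow> 'a" where
  "pt P \<epsilon> = (THE u. u \<in> P \<and> u \<in> \<epsilon>)"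

lemma dt_tree: "decorated_tree T \<Longrightarrow> tree (cells T) (dE T)"
  unfolding decorated_tree_def tree_def by simp

lemma pt_eq: "\<epsilon> = {u,w} \<Longrightarrow> u \<in> P \<Longrightarrow> w \<notin> P \<Longrightarrow> pt P \<epsilon> = u"
  unfolding pt_def by (rule the_equality) auto

lemma gam_path: "decorated_tree T \<Longrightarrow> x \<in> cells T \<Longrightarrow> y \<in> cells T \<Longrightarrow>
  is_path (cells T) (dE T) (gam T x y) \<and> hd (gam T x y) = x \<and> last (gam T x y) = y"
  unfolding gam_def by (rule tree.gpath[OF dt_tree])

lemma gam_eq: "decorated_tree T \<Longrightarrow> is_path (cells T) (dE T) p \<Longrightarrow> hd p = x \<Longrightarrow> last p = y \<Longrightarrow>
  gam T x y = p"
  unfolding gam_def using tree.gpath_eq[OF dt_tree, of T p] by simp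

lemma inc_eq: "decorated_tree T \<Longrightarrow> is_path (cells T) (dE T) p \<Longrightarrow> incident_edges T p = incS T (set p)"
proof -
  assume T: "decorated_tree T" and p: "is_path (cells T) (dE T) p"
  interpret tree "cells T" "dE T" using dt_tree[OF T] .
  show ?thesis
  proof
    show "incident_edges T p \<subseteq> incS T (set p)"
    proof
      fix \<epsilon> assume e: "\<epsilon> \<in> incident_edges T p"
      then have e1: "\<epsilon> \<in> dE T" "\<epsilon> \<notin> set (path_edges p)" and "\<exists>u\<in>set p. u \<in> \<epsilon>"
        unfolding incident_edges_def by auto
      then have ne: "\<epsilon> \<inter> set p \<noteq> {}" by auto
      obtain u w where uw: "\<epsilon> = {u,w}" using edge_form e1 by blast
      have "\<not> \<epsilon> \<subseteq> set p"
      proof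
        assume "\<epsilon> \<subseteq> set p"
        then have "{u,w} \<in> set (path_edges p)" using path_edge_in[OF p] e1 uw by auto
        then show False using e1 uw by simp
      qed
      then show "\<epsilon> \<in> incS T (set p)" using ne e1 unfolding incS_def by auto
    qed
  next
    show "incS T (set p) \<subseteq> incident_edges T p"
      unfolding incS_def incident_edges_def using pe_subset by fastforce
  qed
qed

lemma xx_alt: "decorated_tree T \<Longrightarrow> x \<in> cells T \<Longrightarrow> y \<in> cells T \<Longrightarrow>
  xx T x y = df T y * (\<Prod>\<epsilon>\<in>incS T (set (gam T x y)). dq T \<epsilon> (pt (set (gam T x y)) \<epsilon>))"
proof -
  assume T: "decorated_tree T" and xy: "x \<in> cells T" "y \<in> cells T"
  have p: "is_path (cells T) (dE T) (gam T x y)" using gam_path[OF T xy] by simp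
  show ?thesis unfolding xx_def qpath_def pt_def inc_eq[OF T p] ..
qed

lemma arrow_cells: "\<alpha> \<in> dA T \<Longrightarrow> \<alpha> \<in> cells T" by (simp add: cells_def)
lemma vertex_cells: "v \<in> dV T \<Longrightarrow> v \<in> cells T" by (simp add: cells_def)

lemma arrow_edge_prop: "decorated_tree T \<Longrightarrow> \<alpha> \<in> dA T \<Longrightarrow>
  arrow_edge T \<alpha> \<in> dE T \<and> \<alpha> \<in> arrow_edge T \<alpha> \<and> (\<forall>\<epsilon>\<in>dE T. \<alpha> \<in> \<epsilon> \<longrightarrow> \<epsilon> = arrow_edge T \<alpha>)"
proof -
  assume T: "decorated_tree T" and a: "\<alpha> \<in> dA T"
  have "card {e \<in> dE T. \<alpha> \<in> e} = 1" using T a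
    unfolding decorated_tree_def val_def valency_def by blast
  then obtain x where x: "{e \<in> dE T. \<alpha> \<in> e} = {x}" using card_1_singletonE by metis
  have xm: "x \<in> {e \<in> dE T. \<alpha> \<in> e}" unfolding x by simp
  have all: "\<forall>\<epsilon>\<in>dE T. \<alpha> \<in> \<epsilon> \<longrightarrow> \<epsilon> = x"
  proof (intro ballI impI)
    fix \<epsilon> assume "\<epsilon> \<in> dE T" "\<alpha> \<in> \<epsilon>"
    then have "\<epsilon> \<in> {e \<in> dE T. \<alpha> \<in> e}" by simp
    then show "\<epsilon> = x" unfolding x by simp
  qed
  have "arrow_edge T \<alpha> = x" unfolding arrow_edge_def
    using xm all by (intro the_equality) auto
  then show ?thesis using xm all by auto
qed

lemma gam_self: "decorated_tree T \<Longrightarrow> x \<in> cells T \<Longrightarrow> gam T x x = [x]"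
  using gam_eq tree.single_path[OF dt_tree] by fastforce

lemma pp_arrow: "decorated_tree T \<Longrightarrow> \<alpha> \<in> dA T \<Longrightarrow>
   pp T \<alpha> (arrow_edge T \<alpha>) = (\<Sum>\<gamma>\<in>dA T - A0 T - {\<alpha>}. xx T \<alpha> \<gamma>)"
proof -
  assume T: "decorated_tree T" and a: "\<alpha> \<in> dA T"
  interpret tree "cells T" "dE T" using dt_tree[OF T] .
  have ae: "arrow_edge T \<alpha> \<in> dE T" "\<alpha> \<in> arrow_edge T \<alpha>"
    "\<And>\<epsilon>. \<epsilon>\<in>dE T \<Longrightarrow> \<alpha> \<in> \<epsilon> \<Longrightarrow> \<epsilon> = arrow_edge T \<alpha>"
    using arrow_edge_prop[OF T a] by auto
  have S: "{\<gamma> \<in> dA T - A0 T. arrow_edge T \<alpha> \<in> set (path_edges (gam T \<alpha> \<gamma>))} = dA T - A0 T - {\<alpha>}"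
  proof (intro set_eqI iffI)
    fix \<gamma> assume g: "\<gamma> \<in> {\<gamma> \<in> dA T - A0 T. arrow_edge T \<alpha> \<in> set (path_edges (gam T \<alpha> \<gamma>))}"
    then have "\<gamma> \<noteq> \<alpha>" using gam_self[OF T arrow_cells[OF a]] by auto
    then show "\<gamma> \<in> dA T - A0 T - {\<alpha>}" using g by auto
  next
    fix \<gamma> assume g: "\<gamma> \<in> dA T - A0 T - {\<alpha>}"
    then have gc: "\<gamma> \<in> cells T" by (simp add: cells_def)
    have p: "is_path (cells T) (dE T) (gam T \<alpha> \<gamma>)" "hd (gam T \<alpha> \<gamma>) = \<alpha>" "last (gam T \<alpha> \<gamma>) = \<gamma>"
      using gam_path[OF T arrow_cells[OF a] gc] by auto
    have "\<alpha> \<in> set (gam T \<alpha> \<gamma>)" using p(1,2) unfolding is_path_def by (metis hd_in_set)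
    then obtain u where u: "{\<alpha>,u} \<in> set (path_edges (gam T \<alpha> \<gamma>))"
      using path_has_edge[OF p(1)] p g by auto
    have "{\<alpha>,u} = arrow_edge T \<alpha>" using ae(3) pe_in[OF p(1) u] by simp
    then show "\<gamma> \<in> {\<gamma> \<in> dA T - A0 T. arrow_edge T \<alpha> \<in> set (path_edges (gam T \<alpha> \<gamma>))}"
      using u g by auto
  qed
  have X: "xhat T \<alpha> \<gamma> = xx T \<alpha> \<gamma>" if g: "\<gamma> \<in> dA T - A0 T - {\<alpha>}" for \<gamma>
  proof -
    have "{\<epsilon> \<in> incident_edges T (gam T \<alpha> \<gamma>). \<alpha> \<notin> \<epsilon>} = incident_edges T (gam T \<alpha> \<gamma>)"
    proof (intro set_eqI iffI)
      fix \<epsilon> assume e: "\<epsilon> \<in> incident_edges T (gam T \<alpha> \<gamma>)"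
      show "\<epsilon> \<in> {\<epsilon> \<in> incident_edges T (gam T \<alpha> \<gamma>). \<alpha> \<notin> \<epsilon>}"
      proof (cases "\<alpha> \<in> \<epsilon>")
        case True
        then have "\<epsilon> = arrow_edge T \<alpha>" using ae(3) e unfolding incident_edges_def by auto
        then have "\<epsilon> \<in> set (path_edges (gam T \<alpha> \<gamma>))" using S g by auto
        then show ?thesis using e unfolding incident_edges_def by auto
      qed (use e in auto)
    qed auto
    then show ?thesis unfolding xhat_def xx_def by simp
  qed
  show ?thesis unfolding pp_def S using X by simp
qed

lemma pe_split: "\<epsilon> \<in> set (path_edges p) \<Longrightarrow> \<exists>xs u w ys. p = xs @ u # w # ys \<and> \<epsilon> = {u,w}"
proof (induction p rule: induct_list012)
  case (3 x y zs)
  show ?case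
  proof (cases "\<epsilon> = {x,y}")
    case True then show ?thesis by (intro exI[of _ "[]"]) auto
  next
    case False
    then have "\<epsilon> \<in> set (path_edges (y # zs))" using 3(3) by simp
    then obtain xs u w ys where "y # zs = xs @ u # w # ys" "\<epsilon> = {u,w}" using 3(2) by blast
    then show ?thesis by (intro exI[of _ "x # xs"]) auto
  qed
qed auto

definition phi :: "'a \<Rightarrow> 'a \<Rightarrow> 'a \<Rightarrow> 'a \<Rightarrow> 'a" where
  "phi a b c z = (if z = a \<or> z = b then c else z)"

definition Ed :: "'a dtree \<Rightarrow> 'a \<Rightarrow> 'a \<Rightarrow> 'a set set" where
  "Ed T a b = {\<epsilon> \<in> dE T. a \<in> \<epsilon> \<and> \<epsilon> \<noteq> {a,b}}"

definition agood :: "'a dtree \<Rightarrow> 'a dtree \<Rightarrow> 'a \<Rightarrow> 'a \<Rightarrow> 'a \<Rightarrow> bool" where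
  "agood T T' a b c \<longleftrightarrow> (\<forall>\<epsilon>\<in>Ed T a b. dq T' (phi a b c ` \<epsilon>) c = dq T \<epsilon> a) \<and>
     (\<Prod>\<epsilon>\<in>Ed T b a. dq T' (phi a b c ` \<epsilon>) c) = dq T {a,b} a"

locale contr =
  fixes T T' :: "'a dtree" and a b c :: 'a
  assumes dT: "decorated_tree T" and dT': "decorated_tree T'"
  and eab: "{a,b} \<in> dE T" and aV: "a \<in> dV T"
  and c_new: "c \<notin> cells T - {a,b}"
  and cellsT': "cells T' = phi a b c ` cells T"
  and ET': "dE T' = image (phi a b c) ` (dE T - {{a,b}})"
  and G1: "\<forall>\<epsilon>\<in>dE T - {{a,b}}. \<forall>z\<in>\<epsilon>. z \<notin> {a,b} \<longrightarrow> dq T' (phi a b c ` \<epsilon>) z = dq T \<epsilon> z"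
  and G2: "\<forall>\<epsilon>\<in>dE T - {{a,b}}. b \<in> \<epsilon> \<longrightarrow> dq T' (phi a b c ` \<epsilon>) c = dq T \<epsilon> b"
  and G3: "val T b = 1 \<or> (\<Prod>\<epsilon>\<in>Ed T a b. dq T' (phi a b c ` \<epsilon>) c) = dq T {a,b} b"
  and AG: "agood T T' a b c \<or> val T a = 2"
begin

abbreviation ph where "ph \<equiv> phi a b c"

sublocale t: tree "cells T" "dE T" using dt_tree[OF dT] .
sublocale t': tree "cells T'" "dE T'" using dt_tree[OF dT'] .

lemma ph_a[simp]: "ph a = c" and ph_b[simp]: "ph b = c" by (auto simp: phi_def)
lemma ph_other: "z \<noteq> a \<Longrightarrow> z \<noteq> b \<Longrightarrow> ph z = z" by (auto simp: phi_def)
lemma ab_neq: "a \<noteq> b" using t.edge_neq[OF eab] .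
lemma a_cells: "a \<in> cells T" and b_cells: "b \<in> cells T" using t.edge_sub[OF eab] by auto
lemma c_ne: "z \<in> cells T \<Longrightarrow> z \<noteq> a \<Longrightarrow> z \<noteq> b \<Longrightarrow> z \<noteq> c" using c_new by auto

lemma edge_img: "{s,t} \<in> dE T \<Longrightarrow> {s,t} \<noteq> {a,b} \<Longrightarrow> {ph s, ph t} \<in> dE T'"
proof -
  assume "{s,t} \<in> dE T" "{s,t} \<noteq> {a,b}"
  then have "ph ` {s,t} \<in> dE T'" unfolding ET' by blast
  then show ?thesis by simp
qed

lemma ph_id_set: "set xs \<inter> {a,b} = {} \<Longrightarrow> ph ` set xs = set xs"
  using ph_other by (auto simp: image_iff) (metis IntI empty_iff insertCI ph_other)+

lemma ph_id_map: "set xs \<inter> {a,b} = {} \<Longrightarrow> map ph xs = xs"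
  using ph_other by (induction xs) auto

lemma ab_adjacent: "is_path (cells T) (dE T) p \<Longrightarrow> a \<in> set p \<Longrightarrow> b \<in> set p \<Longrightarrow>
   \<exists>xs u w ys. p = xs @ u # w # ys \<and> {u,w} = {a,b}"
  using t.path_edge_in[OF _ eab] pe_split by metis

lemma contract_path: "x \<in> cells T \<Longrightarrow> y \<in> cells T \<Longrightarrow>
   set (gam T' (ph x) (ph y)) = ph ` set (gam T x y)"
proof -
  assume x: "x \<in> cells T" and y: "y \<in> cells T"
  define p where "p = gam T x y"
  have p: "is_path (cells T) (dE T) p" "hd p = x" "last p = y" using gam_path[OF dT x y] p_def by auto
  have dp: "distinct p" using t.path_distinct[OF p(1)] .
  have sp: "successively (\<lambda>s t. {s,t} \<in> dE T) p" and pne: "p \<noteq> []" and pc: "set p \<subseteq> cells T"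
    using p(1) by (auto simp: is_path_alt)
  have "\<exists>p'. is_path (cells T') (dE T') p' \<and> hd p' = ph x \<and> last p' = ph y \<and> set p' = ph ` set p"
  proof (cases "a \<in> set p \<and> b \<in> set p")
    case True
    then obtain xs u w ys where pd: "p = xs @ u # w # ys" and uw: "{u,w} = {a,b}"
      using ab_adjacent[OF p(1)] by blast
    have uw': "(u = a \<and> w = b) \<or> (u = b \<and> w = a)" using uw ab_neq by (metis doubleton_eq_iff)
    have xsab: "set xs \<inter> {a,b} = {}" and ysab: "set ys \<inter> {a,b} = {}"
      using dp pd uw' by auto
    have xsc: "set xs \<subseteq> cells T" "set ys \<subseteq> cells T" using pc pd by auto
    define p' where "p' = xs @ c # ys"
    have setp': "set p' = ph ` set p"
      using pd uw' ph_id_set[OF xsab] ph_id_set[OF ysab] unfolding p'_def by auto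
    have s1: "successively (\<lambda>s t. {s,t} \<in> dE T) xs" and s2: "successively (\<lambda>s t. {s,t} \<in> dE T) (w # ys)"
      and j1: "xs \<noteq> [] \<Longrightarrow> {last xs, u} \<in> dE T"
      using sp unfolding pd by (auto simp: successively_append_iff)
    have s1': "successively (\<lambda>s t. {s,t} \<in> dE T') xs"
    proof (rule successively_mono[OF s1])
      fix s t assume "s \<in> set xs" "t \<in> set xs" "{s,t} \<in> dE T"
      then show "{s,t} \<in> dE T'" using edge_img[of s t] xsab ph_other by (metis disjoint_iff insertI1 insert_subset subset_insertI)
    qed
    have s2a: "successively (\<lambda>s t. {s,t} \<in> dE T) ys" using s2 by (cases ys) auto
    have s2': "successively (\<lambda>s t. {s,t} \<in> dE T') ys"
    proof (rule successively_mono[OF s2a])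
      fix s t assume "s \<in> set ys" "t \<in> set ys" "{s,t} \<in> dE T"
      then show "{s,t} \<in> dE T'" using edge_img[of s t] ysab ph_other by (metis disjoint_iff insertI1 insert_subset subset_insertI)
    qed
    have s3: "successively (\<lambda>s t. {s,t} \<in> dE T') (c # ys)"
    proof (cases ys)
      case (Cons h ys')
      have "{w, h} \<in> dE T" using s2 Cons by simp
      moreover have "h \<notin> {a,b}" using ysab Cons by auto
      moreover have "ph w = c" using uw' by auto
      ultimately have "{c, h} \<in> dE T'" using edge_img[of w h] ph_other by (metis doubleton_eq_iff insertCI)
      then show ?thesis using s2' Cons by simp
    qed simp
    have j1': "xs \<noteq> [] \<Longrightarrow> {last xs, c} \<in> dE T'"
    proof -
      assume ne: "xs \<noteq> []"
      have l: "last xs \<notin> {a,b}" using xsab ne last_in_set by fastforce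
      have "ph u = c" using uw' by auto
      then show ?thesis using edge_img[OF j1[OF ne]] l ph_other by (metis doubleton_eq_iff insertCI)
    qed
    have succ: "successively (\<lambda>s t. {s,t} \<in> dE T') p'"
      unfolding p'_def using s1' s3 j1' by (auto simp: successively_append_iff)
    have cn: "c \<notin> set xs" "c \<notin> set ys" using c_ne xsab ysab xsc by blast+
    have dist: "distinct p'" unfolding p'_def using dp pd cn by auto
    have ip: "is_path (cells T') (dE T') p'"
      apply (rule is_path_distinctI)
      using setp' pc cellsT' succ dist by (auto simp: p'_def)
    have h: "hd p' = ph x"
    proof (cases xs)
      case Nil then show ?thesis using p(2) pd uw' by (auto simp: p'_def)
    next
      case (Cons h xs')
      then show ?thesis using p(2) pd xsab ph_other by (auto simp: p'_def)
    qed
    have l: "last p' = ph y"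
    proof (cases ys rule: rev_cases)
      case Nil then show ?thesis using p(3) pd uw' by (auto simp: p'_def)
    next
      case (snoc ys' h)
      then show ?thesis using p(3) pd ysab ph_other by (auto simp: p'_def)
    qed
    show ?thesis using ip h l setp' by blast
  next
    case False
    define p' where "p' = map ph p"
    have inj: "inj_on ph (set p)"
    proof
      fix s t assume st: "s \<in> set p" "t \<in> set p" "ph s = ph t"
      show "s = t"
      proof (cases "s \<in> {a,b}"; cases "t \<in> {a,b}")
        assume "s \<in> {a,b}" "t \<in> {a,b}" then show ?thesis using False st by auto
      next
        assume "s \<in> {a,b}" "t \<notin> {a,b}" then show ?thesis using st c_ne pc ph_other
          by (metis insertCI ph_a ph_b subsetD insertE singletonD)
      next
        assume "s \<notin> {a,b}" "t \<in> {a,b}" then show ?thesis using st c_ne pc ph_other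
          by (metis insertCI ph_a ph_b subsetD insertE singletonD)
      next
        assume "s \<notin> {a,b}" "t \<notin> {a,b}" then show ?thesis using st ph_other by auto
      qed
    qed
    have dist: "distinct p'" unfolding p'_def using dp inj by (simp add: distinct_map)
    have succ: "successively (\<lambda>s t. {s,t} \<in> dE T') p'"
      unfolding p'_def successively_map
    proof (rule successively_mono[OF sp])
      fix s t assume "s \<in> set p" "t \<in> set p" "{s,t} \<in> dE T"
      moreover have "{s,t} \<noteq> {a,b}" using False calculation by (metis insertCI doubleton_eq_iff)
      ultimately show "{ph s, ph t} \<in> dE T'" using edge_img by blast
    qed
    have ip: "is_path (cells T') (dE T') p'"
      apply (rule is_path_distinctI)
      using pne pc cellsT' succ dist by (auto simp: p'_def)
    show ?thesis using ip p pne by (intro exI[of _ p']) (auto simp: p'_def hd_map last_map)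
  qed
  then obtain p' where "is_path (cells T') (dE T') p'" "hd p' = ph x" "last p' = ph y" "set p' = ph ` set p"
    by blast
  then show ?thesis using gam_eq[OF dT'] p_def by metis
qed

end

context contr
begin

lemma edge_std: "\<epsilon> \<in> dE T \<Longrightarrow> \<epsilon> \<noteq> {a,b} \<Longrightarrow> \<exists>x z. \<epsilon> = {x,z} \<and> x \<notin> {a,b} \<and> x \<noteq> z \<and> x \<in> cells T \<and> z \<in> cells T"
proof -
  assume e: "\<epsilon> \<in> dE T" "\<epsilon> \<noteq> {a,b}"
  obtain u w where uw: "u \<noteq> w" "\<epsilon> = {u,w}" using t.edge_form[OF e(1)] by blast
  have c: "u \<in> cells T" "w \<in> cells T" using t.edge_sub[OF e(1)] uw by auto
  show ?thesis
  proof (cases "u \<in> {a,b}")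
    case False then show ?thesis using uw c by blast
  next
    case True
    show ?thesis
    proof (cases "w \<in> {a,b}")
      case False then show ?thesis using uw c by (metis insert_commute)
    next
      case True
      then have "\<epsilon> = {a,b}" using \<open>u \<in> {a,b}\<close> uw by auto
      then show ?thesis using e by simp
    qed
  qed
qed

lemma img_edge: "\<epsilon> = {x,z} \<Longrightarrow> ph ` \<epsilon> = {ph x, ph z}" by simp

lemma inj_E: "inj_on (image ph) (dE T - {{a,b}})"
proof
  fix e1 e2 assume e1: "e1 \<in> dE T - {{a,b}}" and e2: "e2 \<in> dE T - {{a,b}}" and eq: "ph ` e1 = ph ` e2"
  obtain x1 z1 where d1: "e1 = {x1,z1}" "x1 \<notin> {a,b}" "x1 \<noteq> z1" "x1 \<in> cells T" "z1 \<in> cells T"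
    using edge_std e1 by blast
  obtain x2 z2 where d2: "e2 = {x2,z2}" "x2 \<notin> {a,b}" "x2 \<noteq> z2" "x2 \<in> cells T" "z2 \<in> cells T"
    using edge_std e2 by blast
  have x1c: "x1 \<noteq> c" "x2 \<noteq> c" using c_ne d1 d2 by auto
  have i1: "ph ` e1 = {x1, ph z1}" "ph ` e2 = {x2, ph z2}" using d1 d2 ph_other by auto
  show "e1 = e2"
  proof (cases "z1 \<in> {a,b}")
    case False
    then have "ph z1 = z1" using ph_other by auto
    then have "ph z1 \<noteq> c" using c_ne d1 False by auto
    then have "c \<notin> ph ` e2" using eq i1 x1c by auto
    then have "z2 \<notin> {a,b}" using i1 by auto
    then show ?thesis using eq i1 d1 d2 ph_other False by auto
  next
    case True
    then have "c \<in> ph ` e2" using eq i1 by auto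
    then have pz2: "ph z2 = c" using i1 x1c by auto
    then have z2: "z2 \<in> {a,b}" using ph_other c_ne d2 by (metis insertCI)
    have "{x1, c} = {x2, c}" using eq i1 pz2 True by auto
    then have x: "x1 = x2" using x1c by (metis doubleton_eq_iff)
    show ?thesis
    proof (rule ccontr)
      assume "e1 \<noteq> e2"
      then have "z1 \<noteq> z2" using d1 d2 x by auto
      then have "{z1,z2} = {a,b}" using True z2 by auto
      moreover have "{x1,z1} \<in> dE T" "{x1,z2} \<in> dE T" using e1 e2 d1 d2 x by auto
      ultimately have "{x1,a} \<in> dE T" "{x1,b} \<in> dE T" by (metis doubleton_eq_iff)+
      moreover have "is_path (cells T) (dE T) [a,b]" using t.two_path[OF eab] .
      ultimately have "a = b" using t.path_nbr_unique[of "[a,b]" x1 a b] d1 by auto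
      then show False using ab_neq by simp
    qed
  qed
qed

lemma F5: "P \<subseteq> cells T \<Longrightarrow> z \<in> cells T \<Longrightarrow> z \<notin> {a,b} \<Longrightarrow> (z \<in> ph ` P \<longleftrightarrow> z \<in> P)"
proof
  assume P: "P \<subseteq> cells T" and z: "z \<in> cells T" "z \<notin> {a,b}" and "z \<in> ph ` P"
  then obtain s where s: "s \<in> P" "z = ph s" by blast
  show "z \<in> P"
  proof (cases "s \<in> {a,b}")
    case True then have "z = c" using s by auto
    then show ?thesis using c_ne z by auto
  next
    case False then show ?thesis using s ph_other by auto
  qed
next
  assume "z \<notin> {a,b}" "z \<in> P" then show "z \<in> ph ` P" using ph_other by (metis image_eqI insertCI)
qed

lemma c_in: "P \<subseteq> cells T \<Longrightarrow> c \<in> ph ` P \<longleftrightarrow> (a \<in> P \<or> b \<in> P)"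
proof
  assume P: "P \<subseteq> cells T" and "c \<in> ph ` P"
  then obtain s where s: "s \<in> P" "c = ph s" by blast
  show "a \<in> P \<or> b \<in> P"
  proof (cases "s \<in> {a,b}")
    case True then show ?thesis using s by auto
  next
    case False then have "s = c" using s ph_other by auto
    then show ?thesis using c_ne False P s by auto
  qed
next
  assume "a \<in> P \<or> b \<in> P" then show "c \<in> ph ` P" by (metis image_eqI ph_a ph_b)
qed

lemma inc_split: "finite (dE X) \<Longrightarrow> (\<Prod>\<epsilon>\<in>incS X P. dq X \<epsilon> (pt P \<epsilon>)) =
  (\<Prod>\<epsilon>\<in>{\<epsilon>\<in>incS X P. pt P \<epsilon> \<notin> Z}. dq X \<epsilon> (pt P \<epsilon>)) * (\<Prod>\<epsilon>\<in>{\<epsilon>\<in>incS X P. pt P \<epsilon> \<in> Z}. dq X \<epsilon> (pt P \<epsilon>))"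
proof -
  assume f: "finite (dE X)"
  have fi: "finite (incS X P)" using f unfolding incS_def by simp
  have "incS X P = {\<epsilon>\<in>incS X P. pt P \<epsilon> \<notin> Z} \<union> {\<epsilon>\<in>incS X P. pt P \<epsilon> \<in> Z}" by auto
  then show ?thesis using fi by (metis (no_types, lifting) prod.union_disjoint finite_Un disjoint_iff mem_Collect_eq)
qed

lemma pt_in: "\<epsilon> = {u,w} \<Longrightarrow> \<epsilon> \<inter> P \<noteq> {} \<Longrightarrow> \<not> \<epsilon> \<subseteq> P \<Longrightarrow> pt P \<epsilon> \<in> P \<and> pt P \<epsilon> \<in> \<epsilon>"
proof -
  assume e: "\<epsilon> = {u,w}" "\<epsilon> \<inter> P \<noteq> {}" "\<not> \<epsilon> \<subseteq> P"
  then have "(u \<in> P \<and> w \<notin> P) \<or> (w \<in> P \<and> u \<notin> P)" by auto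
  then show ?thesis
  proof
    assume "u \<in> P \<and> w \<notin> P" then show ?thesis using pt_eq[OF e(1)] e by auto
  next
    assume "w \<in> P \<and> u \<notin> P" then show ?thesis using pt_eq[of \<epsilon> w u] e by (auto simp: insert_commute)
  qed
qed

lemma I1_eq:
  assumes p: "is_path (cells T) (dE T) p"
  shows "(\<Prod>\<epsilon>\<in>{\<epsilon>\<in>incS T' (ph ` set p). pt (ph ` set p) \<epsilon> \<notin> {c}}. dq T' \<epsilon> (pt (ph ` set p) \<epsilon>)) =
         (\<Prod>\<epsilon>\<in>{\<epsilon>\<in>incS T (set p). pt (set p) \<epsilon> \<notin> {a,b}}. dq T \<epsilon> (pt (set p) \<epsilon>))"
proof -
  define P where "P = set p"
  have P: "P \<subseteq> cells T" using p unfolding P_def is_path_def by auto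
  let ?I1 = "{\<epsilon>\<in>incS T P. pt P \<epsilon> \<notin> {a,b}}"
  let ?I1' = "{\<epsilon>\<in>incS T' (ph ` P). pt (ph ` P) \<epsilon> \<notin> {c}}"
  have sub: "?I1 \<subseteq> dE T - {{a,b}}"
  proof
    fix \<epsilon> assume e: "\<epsilon> \<in> ?I1"
    have e1: "\<epsilon> \<in> dE T" "\<epsilon> \<inter> P \<noteq> {}" "\<not> \<epsilon> \<subseteq> P" "pt P \<epsilon> \<notin> {a,b}"
      using e unfolding incS_def by auto
    then obtain u w where uw: "\<epsilon> = {u,w}" using t.edge_form by blast
    have "pt P \<epsilon> \<in> \<epsilon>" using pt_in[OF uw e1(2,3)] by simp
    then have "\<epsilon> \<noteq> {a,b}" using e1(4) by auto
    then show "\<epsilon> \<in> dE T - {{a,b}}" using e1(1) by simp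
  qed
  have key: "ph ` \<epsilon> \<in> ?I1' \<and> dq T' (ph ` \<epsilon>) (pt (ph ` P) (ph ` \<epsilon>)) = dq T \<epsilon> (pt P \<epsilon>)" if e: "\<epsilon> \<in> ?I1" for \<epsilon>
  proof -
    have eE: "\<epsilon> \<in> dE T" "\<epsilon> \<noteq> {a,b}" using sub e by auto
    obtain u0 w0 where uw0: "\<epsilon> = {u0,w0}" using t.edge_form eE by blast
    have inc: "\<epsilon> \<inter> P \<noteq> {}" "\<not> \<epsilon> \<subseteq> P" using e unfolding incS_def by auto
    define u where "u = pt P \<epsilon>"
    have u: "u \<in> P" "u \<in> \<epsilon>" "u \<notin> {a,b}" using pt_in[OF uw0 inc] e u_def by auto
    obtain w where w: "\<epsilon> = {u,w}" using u uw0 by auto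
    have wP: "w \<notin> P" using w inc u by auto
    have uc: "u \<in> cells T" "w \<in> cells T" using t.edge_sub[OF eE(1)] w by auto
    have pu: "ph u = u" using u ph_other by auto
    have img: "ph ` \<epsilon> = {u, ph w}" using w pu by simp
    have uP': "u \<in> ph ` P" using u pu by (metis image_eqI)
    have wP': "ph w \<notin> ph ` P"
    proof (cases "w \<in> {a,b}")
      case False
      then show ?thesis using F5[OF P uc(2) False] wP ph_other by auto
    next
      case True
      have "a \<notin> P \<and> b \<notin> P"
      proof (rule ccontr)
        assume "\<not> (a \<notin> P \<and> b \<notin> P)"
        then obtain oo where o: "oo \<in> {a,b}" "oo \<noteq> w" "oo \<in> P" using True wP by auto
        have "{w,oo} = {a,b}" using o True ab_neq by auto
        then have "{w,oo} \<in> dE T" using eab by simp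
        moreover have "{w,u} \<in> dE T" using eE w by (simp add: insert_commute)
        ultimately have "oo = u" using t.path_nbr_unique[OF p, of w oo u] wP o u P_def by auto
        then show False using o u by auto
      qed
      then show ?thesis using True c_in[OF P] by auto
    qed
    have "ph ` \<epsilon> \<in> dE T'" unfolding ET' using eE by blast
    moreover have pt': "pt (ph ` P) (ph ` \<epsilon>) = u" using pt_eq[OF img uP' wP'] .
    moreover have "u \<noteq> c" using c_ne uc u by auto
    ultimately have "ph ` \<epsilon> \<in> ?I1'" using img uP' wP' unfolding incS_def by auto
    moreover have "dq T' (ph ` \<epsilon>) u = dq T \<epsilon> u" using G1 eE u by auto
    ultimately show ?thesis using pt' u_def by simp
  qed
  have img: "?I1' = image ph ` ?I1"
  proof
    show "image ph ` ?I1 \<subseteq> ?I1'" using key by blast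
  next
    show "?I1' \<subseteq> image ph ` ?I1"
    proof
      fix \<epsilon>' assume e': "\<epsilon>' \<in> ?I1'"
      then have "\<epsilon>' \<in> dE T'" unfolding incS_def by auto
      then obtain \<epsilon> where e: "\<epsilon> \<in> dE T - {{a,b}}" "\<epsilon>' = ph ` \<epsilon>" unfolding ET' by blast
      obtain u0 w0 where uw0: "\<epsilon>' = {u0,w0}" using t'.edge_form e' unfolding incS_def by blast
      have inc': "\<epsilon>' \<inter> ph ` P \<noteq> {}" "\<not> \<epsilon>' \<subseteq> ph ` P" using e' unfolding incS_def by auto
      define v where "v = pt (ph ` P) \<epsilon>'"
      have v: "v \<in> ph ` P" "v \<in> \<epsilon>'" "v \<noteq> c" using pt_in[OF uw0 inc'] e' v_def by auto
      then obtain s where s: "s \<in> \<epsilon>" "v = ph s" using e by auto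
      have sab: "s \<notin> {a,b}" using s v by auto
      have vs: "v = s" using s sab ph_other by auto
      obtain t where st: "\<epsilon> = {s,t}"
      proof -
        obtain u1 w1 where "u1 \<noteq> w1" "\<epsilon> = {u1,w1}" using e t.edge_form by blast
        then show ?thesis using that s by (cases "s = u1") (auto simp: insert_commute)
      qed
      have sc: "s \<in> cells T" using t.edge_sub e s by auto
      have sP: "s \<in> P" using F5[OF P sc sab] v vs by simp
      have "\<epsilon>' = {s, ph t}" using e st vs s by simp
      then have "ph t \<notin> ph ` P" using inc' v vs by auto
      then have tP: "t \<notin> P" by auto
      have "\<epsilon> \<in> incS T P" using e st sP tP unfolding incS_def by auto
      moreover have "pt P \<epsilon> = s" using pt_eq[OF st sP tP] .
      ultimately show "\<epsilon>' \<in> image ph ` ?I1" using sab e by blast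
    qed
  qed
  have inj: "inj_on (image ph) ?I1" using inj_on_subset[OF inj_E sub] .
  have "(\<Prod>\<epsilon>\<in>?I1'. dq T' \<epsilon> (pt (ph ` P) \<epsilon>)) = (\<Prod>\<epsilon>\<in>?I1. dq T' (ph ` \<epsilon>) (pt (ph ` P) (ph ` \<epsilon>)))"
    unfolding img using prod.reindex[OF inj] by simp
  also have "\<dots> = (\<Prod>\<epsilon>\<in>?I1. dq T \<epsilon> (pt P \<epsilon>))" using key by (intro prod.cong) auto
  finally show ?thesis unfolding P_def .
qed

end

context contr
begin

definition K :: "'a \<Rightarrow> 'a \<Rightarrow> 'a set \<Rightarrow> 'a set set" where
  "K s oo P = {\<epsilon> \<in> Ed T s oo. \<not> \<epsilon> - {s} \<subseteq> P}"

lemma so_cases: "{s,oo} = {a,b} \<Longrightarrow> (s = a \<and> oo = b) \<or> (s = b \<and> oo = a)"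
  using ab_neq by (metis doubleton_eq_iff)

lemma Ed_form: "{s,oo} = {a,b} \<Longrightarrow> \<epsilon> \<in> Ed T s oo \<Longrightarrow>
   \<exists>x. \<epsilon> = {s,x} \<and> x \<notin> {a,b} \<and> x \<in> cells T \<and> \<epsilon> \<in> dE T - {{a,b}}"
proof -
  assume so: "{s,oo} = {a,b}" and e: "\<epsilon> \<in> Ed T s oo"
  have e1: "\<epsilon> \<in> dE T" "s \<in> \<epsilon>" "\<epsilon> \<noteq> {s,oo}" using e unfolding Ed_def by auto
  obtain u w where uw: "u \<noteq> w" "\<epsilon> = {u,w}" using t.edge_form[OF e1(1)] by blast
  obtain x where x: "\<epsilon> = {s,x}" "x \<noteq> s" using uw e1(2) by (cases "s = u") (auto simp: insert_commute)
  have "x \<noteq> oo" using x e1(3) by auto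
  then have "x \<notin> {a,b}" using x(2) so by auto
  moreover have "x \<in> cells T" using t.edge_sub[OF e1(1)] x by auto
  moreover have "\<epsilon> \<noteq> {a,b}" using e1(3) so by simp
  ultimately show ?thesis using x e1(1) by blast
qed

lemma Ed_fin: "finite (Ed T s oo)" using t.fin1 unfolding Ed_def by simp

lemma Ed_disj: "Ed T a b \<inter> Ed T b a = {}"
proof (rule ccontr)
  assume "Ed T a b \<inter> Ed T b a \<noteq> {}"
  then obtain \<epsilon> where e: "\<epsilon> \<in> dE T" "a \<in> \<epsilon>" "b \<in> \<epsilon>" "\<epsilon> \<noteq> {a,b}" unfolding Ed_def by auto
  obtain u w where "\<epsilon> = {u,w}" using t.edge_form[OF e(1)] by blast
  then have "\<epsilon> = {a,b}" using e(2,3) ab_neq by auto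
  then show False using e(4) by simp
qed

lemma Ed_sub: "Ed T a b \<union> Ed T b a \<subseteq> dE T - {{a,b}}"
  unfolding Ed_def by (auto simp: insert_commute)

lemma K_sub: "K s oo P \<subseteq> Ed T s oo" unfolding K_def by auto

lemma I2'_empty:
  assumes "c \<notin> P'"
  shows "{\<epsilon>\<in>incS T' P'. pt P' \<epsilon> \<in> {c}} = {}"
proof -
  have "pt P' \<epsilon> \<in> P'" if e: "\<epsilon> \<in> incS T' P'" for \<epsilon>
  proof -
    have e1: "\<epsilon> \<in> dE T'" "\<epsilon> \<inter> P' \<noteq> {}" "\<not> \<epsilon> \<subseteq> P'" using e unfolding incS_def by auto
    obtain u w where uw: "\<epsilon> = {u,w}" using t'.edge_form[OF e1(1)] by blast
    show ?thesis using pt_in[OF uw e1(2,3)] by simp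
  qed
  then show ?thesis using assms by auto
qed

lemma I2_none:
  assumes "a \<notin> P" "b \<notin> P"
  shows "{\<epsilon>\<in>incS T P. pt P \<epsilon> \<in> {a,b}} = {}"
proof -
  have "pt P \<epsilon> \<in> P" if e: "\<epsilon> \<in> incS T P" for \<epsilon>
  proof -
    have e1: "\<epsilon> \<in> dE T" "\<epsilon> \<inter> P \<noteq> {}" "\<not> \<epsilon> \<subseteq> P" using e unfolding incS_def by auto
    obtain u w where uw: "\<epsilon> = {u,w}" using t.edge_form[OF e1(1)] by blast
    show ?thesis using pt_in[OF uw e1(2,3)] by simp
  qed
  then show ?thesis using assms by auto
qed

lemma I2'_prod:
  assumes P: "P \<subseteq> cells T" and cP: "c \<in> ph ` P"
  shows "(\<Prod>\<epsilon>\<in>{\<epsilon>\<in>incS T' (ph ` P). pt (ph ` P) \<epsilon> \<in> {c}}. dq T' \<epsilon> (pt (ph ` P) \<epsilon>)) =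
     (\<Prod>\<epsilon>\<in>K a b P. dq T' (ph ` \<epsilon>) c) * (\<Prod>\<epsilon>\<in>K b a P. dq T' (ph ` \<epsilon>) c)"
proof -
  let ?I = "{\<epsilon>\<in>incS T' (ph ` P). pt (ph ` P) \<epsilon> \<in> {c}}"
  have key: "ph ` \<epsilon> \<in> ?I" if e: "\<epsilon> \<in> K s oo P" and so: "{s,oo} = {a,b}" for \<epsilon> s oo
  proof -
    have e0: "\<epsilon> \<in> Ed T s oo" "\<not> \<epsilon> - {s} \<subseteq> P" using e unfolding K_def by auto
    obtain x where x: "\<epsilon> = {s,x}" "x \<notin> {a,b}" "x \<in> cells T" "\<epsilon> \<in> dE T - {{a,b}}"
      using Ed_form[OF so e0(1)] by blast
    have xs: "x \<noteq> s" using x so by auto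
    have xP: "x \<notin> P" using e0(2) x xs by auto
    have ps: "ph s = c" using so_cases[OF so] by auto
    have img: "ph ` \<epsilon> = {c, x}" using x ps ph_other by auto
    have xP': "x \<notin> ph ` P" using F5[OF P x(3) x(2)] xP by simp
    have "ph ` \<epsilon> \<in> dE T'" unfolding ET' using x(4) by blast
    moreover have "pt (ph ` P) (ph ` \<epsilon>) = c" using pt_eq[OF img cP xP'] .
    ultimately show ?thesis using img cP xP' unfolding incS_def by auto
  qed
  have ab: "{a,b} = {a,b}" "{b,a} = {a,b}" by (auto simp: insert_commute)
  have img: "?I = image ph ` (K a b P \<union> K b a P)"
  proof
    show "image ph ` (K a b P \<union> K b a P) \<subseteq> ?I"
    proof
      fix \<epsilon>' assume "\<epsilon>' \<in> image ph ` (K a b P \<union> K b a P)"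
      then obtain \<epsilon> where e: "\<epsilon> \<in> K a b P \<or> \<epsilon> \<in> K b a P" "\<epsilon>' = ph ` \<epsilon>" by blast
      from e(1) show "\<epsilon>' \<in> ?I"
      proof
        assume "\<epsilon> \<in> K a b P" then show ?thesis using key[OF _ ab(1)] e(2) by simp
      next
        assume "\<epsilon> \<in> K b a P" then show ?thesis using key[OF _ ab(2)] e(2) by simp
      qed
    qed
  next
    show "?I \<subseteq> image ph ` (K a b P \<union> K b a P)"
    proof
      fix \<epsilon>' assume e': "\<epsilon>' \<in> ?I"
      have e1: "\<epsilon>' \<in> dE T'" "\<epsilon>' \<inter> ph ` P \<noteq> {}" "\<not> \<epsilon>' \<subseteq> ph ` P" "pt (ph ` P) \<epsilon>' = c"
        using e' unfolding incS_def by auto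
      obtain \<epsilon> where e: "\<epsilon> \<in> dE T - {{a,b}}" "\<epsilon>' = ph ` \<epsilon>" using e1(1) unfolding ET' by blast
      obtain x z where xz: "\<epsilon> = {x,z}" "x \<notin> {a,b}" "x \<noteq> z" "x \<in> cells T" "z \<in> cells T"
        using edge_std e by blast
      obtain u0 w0 where uw0: "\<epsilon>' = {u0,w0}" using t'.edge_form[OF e1(1)] by blast
      have "c \<in> \<epsilon>'" using pt_in[OF uw0 e1(2,3)] e1(4) by simp
      moreover have xc: "x \<noteq> c" using c_ne xz by auto
      moreover have px: "ph x = x" using xz ph_other by auto
      ultimately have pz: "ph z = c" using e xz by auto
      have z: "z \<in> {a,b}"
      proof (rule ccontr)
        assume zn: "z \<notin> {a,b}"
        then have "ph z = z" using ph_other by auto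
        then show False using pz c_ne[OF xz(5)] zn by auto
      qed
      have img: "\<epsilon>' = {x, c}" by (simp add: e(2) xz(1) pz px)
      have "x \<notin> ph ` P" using e1(3) img cP by auto
      then have xP: "x \<notin> P" using F5[OF P xz(4) xz(2)] by simp
      have Kz: "\<epsilon> \<in> K z oo P" if zo: "{z,oo} = {a,b}" for oo
      proof -
        have "\<epsilon> - {z} = {x}" using xz by auto
        then have "\<not> \<epsilon> - {z} \<subseteq> P" using xP by simp
        moreover have "\<epsilon> \<noteq> {z,oo}" using xz zo by auto
        moreover have "\<epsilon> \<in> dE T" "z \<in> \<epsilon>" using e xz by auto
        ultimately show ?thesis unfolding K_def Ed_def by simp
      qed
      have "\<epsilon> \<in> K a b P \<or> \<epsilon> \<in> K b a P"
        using z Kz[of b] Kz[of a] by (auto simp: insert_commute)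
      then show "\<epsilon>' \<in> image ph ` (K a b P \<union> K b a P)" using e by blast
    qed
  qed
  have sub: "K a b P \<union> K b a P \<subseteq> dE T - {{a,b}}" using K_sub Ed_sub by blast
  have inj: "inj_on (image ph) (K a b P \<union> K b a P)" using inj_on_subset[OF inj_E sub] .
  have pt': "pt (ph ` P) (ph ` \<epsilon>) = c" if "\<epsilon> \<in> K a b P \<union> K b a P" for \<epsilon>
  proof -
    have "ph ` \<epsilon> \<in> ?I" using that key[OF _ ab(1)] key[OF _ ab(2)] by blast
    then show ?thesis by simp
  qed
  have "(\<Prod>\<epsilon>\<in>?I. dq T' \<epsilon> (pt (ph ` P) \<epsilon>)) = (\<Prod>\<epsilon>\<in>K a b P \<union> K b a P. dq T' (ph ` \<epsilon>) (pt (ph ` P) (ph ` \<epsilon>)))"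
    by (simp only: img prod.reindex[OF inj] comp_def)
  also have "\<dots> = (\<Prod>\<epsilon>\<in>K a b P \<union> K b a P. dq T' (ph ` \<epsilon>) c)" using pt' by (intro prod.cong) auto
  also have "\<dots> = (\<Prod>\<epsilon>\<in>K a b P. dq T' (ph ` \<epsilon>) c) * (\<Prod>\<epsilon>\<in>K b a P. dq T' (ph ` \<epsilon>) c)"
  proof (rule prod.union_disjoint)
    show "finite (K a b P)" by (rule finite_subset[OF K_sub Ed_fin])
    show "finite (K b a P)" by (rule finite_subset[OF K_sub Ed_fin])
    show "K a b P \<inter> K b a P = {}" using Ed_disj K_sub[of a b P] K_sub[of b a P] by blast
  qed
  finally show ?thesis .
qed

lemma I2_both:
  assumes aP: "a \<in> P" and bP: "b \<in> P"
  shows "(\<Prod>\<epsilon>\<in>{\<epsilon>\<in>incS T P. pt P \<epsilon> \<in> {a,b}}. dq T \<epsilon> (pt P \<epsilon>)) =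
     (\<Prod>\<epsilon>\<in>K a b P. dq T \<epsilon> a) * (\<Prod>\<epsilon>\<in>K b a P. dq T \<epsilon> b)"
proof -
  let ?I = "{\<epsilon>\<in>incS T P. pt P \<epsilon> \<in> {a,b}}"
  have key: "\<epsilon> \<in> ?I \<and> pt P \<epsilon> = s" if e: "\<epsilon> \<in> K s oo P" and so: "{s,oo} = {a,b}" for \<epsilon> s oo
  proof -
    have e0: "\<epsilon> \<in> Ed T s oo" "\<not> \<epsilon> - {s} \<subseteq> P" using e unfolding K_def by auto
    obtain x where x: "\<epsilon> = {s,x}" "x \<notin> {a,b}" "x \<in> cells T" "\<epsilon> \<in> dE T - {{a,b}}"
      using Ed_form[OF so e0(1)] by blast
    have xs: "x \<noteq> s" using x so by auto
    have xP: "x \<notin> P" using e0(2) x xs by auto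
    have sP: "s \<in> P" using so aP bP by (metis insertI1 so_cases)
    have pt: "pt P \<epsilon> = s" using pt_eq[OF x(1) sP xP] .
    have "s \<in> {a,b}" using so by auto
    then show ?thesis using pt x sP xP unfolding incS_def by auto
  qed
  have ab: "{a,b} = {a,b}" "{b,a} = {a,b}" by (auto simp: insert_commute)
  have img: "?I = K a b P \<union> K b a P"
  proof
    show "K a b P \<union> K b a P \<subseteq> ?I" using key ab by blast
  next
    show "?I \<subseteq> K a b P \<union> K b a P"
    proof
      fix \<epsilon> assume e: "\<epsilon> \<in> ?I"
      have e1: "\<epsilon> \<in> dE T" "\<epsilon> \<inter> P \<noteq> {}" "\<not> \<epsilon> \<subseteq> P" "pt P \<epsilon> \<in> {a,b}"
        using e unfolding incS_def by auto
      obtain u w where uw: "\<epsilon> = {u,w}" using t.edge_form[OF e1(1)] by blast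
      have "pt P \<epsilon> \<in> \<epsilon>" using pt_in[OF uw e1(2,3)] by simp
      then have ne: "\<epsilon> \<noteq> {a,b}" using e1(3) aP bP by auto
      obtain x z where xz: "\<epsilon> = {x,z}" "x \<notin> {a,b}" "x \<noteq> z" "x \<in> cells T" "z \<in> cells T"
        using edge_std e1(1) ne by blast
      have "pt P \<epsilon> = z" using \<open>pt P \<epsilon> \<in> \<epsilon>\<close> xz e1(4) by auto
      then have z: "z \<in> {a,b}" using e1(4) by simp
      have xP: "x \<notin> P" using e1(3) xz z aP bP by auto
      have "\<epsilon> - {z} = {x}" using xz by auto
      then show "\<epsilon> \<in> K a b P \<union> K b a P" using z xz e1(1) xP ne unfolding K_def Ed_def
        by (auto simp: insert_commute)
    qed
  qed
  have fin: "finite (K a b P)" "finite (K b a P)" by (rule finite_subset[OF K_sub Ed_fin])+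
  have disj: "K a b P \<inter> K b a P = {}" using Ed_disj K_sub[of a b P] K_sub[of b a P] by blast
  have "(\<Prod>\<epsilon>\<in>?I. dq T \<epsilon> (pt P \<epsilon>)) = (\<Prod>\<epsilon>\<in>K a b P. dq T \<epsilon> (pt P \<epsilon>)) * (\<Prod>\<epsilon>\<in>K b a P. dq T \<epsilon> (pt P \<epsilon>))"
    unfolding img by (rule prod.union_disjoint[OF fin disj])
  also have "\<dots> = (\<Prod>\<epsilon>\<in>K a b P. dq T \<epsilon> a) * (\<Prod>\<epsilon>\<in>K b a P. dq T \<epsilon> b)"
    using key ab by (metis (no_types, lifting) prod.cong)
  finally show ?thesis .
qed

lemma I2_one:
  assumes so: "{s,oo} = {a,b}" and sP: "s \<in> P" and oP: "oo \<notin> P"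
  shows "(\<Prod>\<epsilon>\<in>{\<epsilon>\<in>incS T P. pt P \<epsilon> \<in> {a,b}}. dq T \<epsilon> (pt P \<epsilon>)) =
     dq T {a,b} s * (\<Prod>\<epsilon>\<in>K s oo P. dq T \<epsilon> s)"
proof -
  let ?I = "{\<epsilon>\<in>incS T P. pt P \<epsilon> \<in> {a,b}}"
  have sab: "s \<in> {a,b}" "oo \<in> {a,b}" using so by auto
  have key: "\<epsilon> \<in> ?I \<and> pt P \<epsilon> = s" if e: "\<epsilon> \<in> K s oo P" for \<epsilon>
  proof -
    have e0: "\<epsilon> \<in> Ed T s oo" "\<not> \<epsilon> - {s} \<subseteq> P" using e unfolding K_def by auto
    obtain x where x: "\<epsilon> = {s,x}" "x \<notin> {a,b}" "x \<in> cells T" "\<epsilon> \<in> dE T - {{a,b}}"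
      using Ed_form[OF so e0(1)] by blast
    have xs: "x \<noteq> s" using x so by auto
    have xP: "x \<notin> P" using e0(2) x xs by auto
    have pt: "pt P \<epsilon> = s" using pt_eq[OF x(1) sP xP] .
    then show ?thesis using pt x sP xP sab unfolding incS_def by auto
  qed
  have eI: "{a,b} \<in> ?I \<and> pt P {a,b} = s"
  proof -
    have "pt P {a,b} = s" using pt_eq[of "{a,b}" s oo P] so sP oP by simp
    then show ?thesis using eab sP oP sab so unfolding incS_def by auto
  qed
  have img: "?I = insert {a,b} (K s oo P)"
  proof
    show "insert {a,b} (K s oo P) \<subseteq> ?I" using key eI by blast
  next
    show "?I \<subseteq> insert {a,b} (K s oo P)"
    proof
      fix \<epsilon> assume e: "\<epsilon> \<in> ?I"
      have e1: "\<epsilon> \<in> dE T" "\<epsilon> \<inter> P \<noteq> {}" "\<not> \<epsilon> \<subseteq> P" "pt P \<epsilon> \<in> {a,b}"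
        using e unfolding incS_def by auto
      show "\<epsilon> \<in> insert {a,b} (K s oo P)"
      proof (cases "\<epsilon> = {a,b}")
        case False
        obtain u w where uw: "\<epsilon> = {u,w}" using t.edge_form[OF e1(1)] by blast
        have ptin: "pt P \<epsilon> \<in> \<epsilon>" "pt P \<epsilon> \<in> P" using pt_in[OF uw e1(2,3)] by auto
        obtain x z where xz: "\<epsilon> = {x,z}" "x \<notin> {a,b}" "x \<noteq> z" "x \<in> cells T" "z \<in> cells T"
          using edge_std e1(1) False by blast
        have "pt P \<epsilon> = z" using ptin xz e1(4) by auto
        then have z: "z = s" using e1(4) ptin oP sab so_cases[OF so] by auto
        have xP: "x \<notin> P" using e1(3) xz z sP by auto
        have "\<epsilon> - {z} = {x}" using xz by auto
        moreover have "\<epsilon> \<noteq> {s,oo}" using False so by simp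
        ultimately show ?thesis using z xz e1(1) xP unfolding K_def Ed_def by auto
      qed simp
    qed
  qed
  have fin: "finite (K s oo P)" by (rule finite_subset[OF K_sub Ed_fin])
  have nin: "{a,b} \<notin> K s oo P" using so unfolding K_def Ed_def by auto
  have "(\<Prod>\<epsilon>\<in>?I. dq T \<epsilon> (pt P \<epsilon>)) = dq T {a,b} (pt P {a,b}) * (\<Prod>\<epsilon>\<in>K s oo P. dq T \<epsilon> (pt P \<epsilon>))"
    unfolding img using prod.insert[OF fin nin] .
  also have "\<dots> = dq T {a,b} s * (\<Prod>\<epsilon>\<in>K s oo P. dq T \<epsilon> s)"
    using key eI by (metis (no_types, lifting) prod.cong)
  finally show ?thesis .
qed

lemma K_all:
  assumes p: "is_path (cells T) (dE T) p" and so: "{s,oo} = {a,b}" and sP: "s \<in> set p" and oP: "oo \<notin> set p"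
  shows "K oo s (set p) = Ed T oo s"
proof -
  have os: "{oo,s} = {a,b}" using so by (auto simp: insert_commute)
  have "\<not> \<epsilon> - {oo} \<subseteq> set p" if e: "\<epsilon> \<in> Ed T oo s" for \<epsilon>
  proof
    assume sub: "\<epsilon> - {oo} \<subseteq> set p"
    obtain x where x: "\<epsilon> = {oo,x}" "x \<notin> {a,b}" "x \<in> cells T" "\<epsilon> \<in> dE T - {{a,b}}"
      using Ed_form[OF os e] by blast
    have xo: "x \<noteq> oo" using x so by auto
    then have xP: "x \<in> set p" using sub x by auto
    have "{oo,x} \<in> dE T" using x by simp
    moreover have "{oo,s} \<in> dE T" using os eab by simp
    ultimately have "x = s" using t.path_nbr_unique[OF p oP, of x s] xP sP by simp
    then show False using x so by auto
  qed
  then show ?thesis unfolding K_def by auto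
qed

end

context contr
begin

lemma G2': "\<epsilon> \<in> K b a P \<Longrightarrow> dq T' (ph ` \<epsilon>) c = dq T \<epsilon> b"
proof -
  assume e: "\<epsilon> \<in> K b a P"
  then have e1: "\<epsilon> \<in> Ed T b a" using K_sub by blast
  then have "\<epsilon> \<in> dE T - {{a,b}}" using Ed_sub by blast
  moreover have "b \<in> \<epsilon>" using e1 unfolding Ed_def by simp
  ultimately show ?thesis using G2 by blast
qed

lemma Ka_lemma:
  assumes p: "is_path (cells T) (dE T) p"
    and cond: "agood T T' a b c \<or> (val T a = 2 \<and> a \<in> set p \<and> a \<noteq> hd p \<and> a \<noteq> last p)"
  shows "(\<Prod>\<epsilon>\<in>K a b (set p). dq T' (ph ` \<epsilon>) c) = (\<Prod>\<epsilon>\<in>K a b (set p). dq T \<epsilon> a)"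
  using cond
proof
  assume "agood T T' a b c"
  then have "\<forall>\<epsilon>\<in>Ed T a b. dq T' (ph ` \<epsilon>) c = dq T \<epsilon> a" unfolding agood_def by simp
  then show ?thesis using K_sub[of a b "set p"] by (intro prod.cong) auto
next
  assume v: "val T a = 2 \<and> a \<in> set p \<and> a \<noteq> hd p \<and> a \<noteq> last p"
  have "K a b (set p) = {}"
  proof (rule ccontr)
    assume "K a b (set p) \<noteq> {}"
    then obtain \<epsilon> where e: "\<epsilon> \<in> Ed T a b" "\<not> \<epsilon> - {a} \<subseteq> set p" unfolding K_def by auto
    have "\<epsilon> \<in> dE T" "a \<in> \<epsilon>" using e unfolding Ed_def by auto
    then have "\<epsilon> \<subseteq> set p" using t.path_val2[OF p] v unfolding val_def by metis
    then show False using e by auto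
  qed
  then show ?thesis by simp
qed

lemma prod_main:
  assumes x: "x \<in> cells T" and y: "y \<in> cells T" and xy: "ph x \<noteq> ph y"
    and cond: "agood T T' a b c \<or> (val T a = 2 \<and> x \<noteq> a \<and> y \<noteq> a)"
  shows "(\<Prod>\<epsilon>\<in>incS T' (set (gam T' (ph x) (ph y))). dq T' \<epsilon> (pt (set (gam T' (ph x) (ph y))) \<epsilon>)) =
         (\<Prod>\<epsilon>\<in>incS T (set (gam T x y)). dq T \<epsilon> (pt (set (gam T x y)) \<epsilon>))"
proof -
  define p where "p = gam T x y"
  have p: "is_path (cells T) (dE T) p" "hd p = x" "last p = y" using gam_path[OF dT x y] p_def by auto
  define P where "P = set p"
  have P: "P \<subseteq> cells T" using p(1) unfolding P_def is_path_def by auto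
  have P': "set (gam T' (ph x) (ph y)) = ph ` P" using contract_path[OF x y] p_def P_def by simp
  have hl: "hd p \<noteq> last p" using p xy by auto
  let ?g = "\<lambda>S. (\<Prod>\<epsilon>\<in>S. dq T' (ph ` \<epsilon>) c)"
  have L: "(\<Prod>\<epsilon>\<in>incS T' (ph ` P). dq T' \<epsilon> (pt (ph ` P) \<epsilon>)) =
     (\<Prod>\<epsilon>\<in>{\<epsilon>\<in>incS T' (ph ` P). pt (ph ` P) \<epsilon> \<notin> {c}}. dq T' \<epsilon> (pt (ph ` P) \<epsilon>)) *
     (\<Prod>\<epsilon>\<in>{\<epsilon>\<in>incS T' (ph ` P). pt (ph ` P) \<epsilon> \<in> {c}}. dq T' \<epsilon> (pt (ph ` P) \<epsilon>))"
    by (rule inc_split[OF t'.fin1])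
  have R: "(\<Prod>\<epsilon>\<in>incS T P. dq T \<epsilon> (pt P \<epsilon>)) =
     (\<Prod>\<epsilon>\<in>{\<epsilon>\<in>incS T P. pt P \<epsilon> \<notin> {a,b}}. dq T \<epsilon> (pt P \<epsilon>)) *
     (\<Prod>\<epsilon>\<in>{\<epsilon>\<in>incS T P. pt P \<epsilon> \<in> {a,b}}. dq T \<epsilon> (pt P \<epsilon>))"
    by (rule inc_split[OF t.fin1])
  have I1: "(\<Prod>\<epsilon>\<in>{\<epsilon>\<in>incS T' (ph ` P). pt (ph ` P) \<epsilon> \<notin> {c}}. dq T' \<epsilon> (pt (ph ` P) \<epsilon>)) =
     (\<Prod>\<epsilon>\<in>{\<epsilon>\<in>incS T P. pt P \<epsilon> \<notin> {a,b}}. dq T \<epsilon> (pt P \<epsilon>))"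
    using I1_eq[OF p(1)] P_def by simp
  have I2: "(\<Prod>\<epsilon>\<in>{\<epsilon>\<in>incS T' (ph ` P). pt (ph ` P) \<epsilon> \<in> {c}}. dq T' \<epsilon> (pt (ph ` P) \<epsilon>)) =
     (\<Prod>\<epsilon>\<in>{\<epsilon>\<in>incS T P. pt P \<epsilon> \<in> {a,b}}. dq T \<epsilon> (pt P \<epsilon>))"
  proof (cases "a \<in> P \<or> b \<in> P")
    case False
    then have "c \<notin> ph ` P" using c_in[OF P] by simp
    then have "{\<epsilon>\<in>incS T' (ph ` P). pt (ph ` P) \<epsilon> \<in> {c}} = {}" by (rule I2'_empty)
    moreover have "{\<epsilon>\<in>incS T P. pt P \<epsilon> \<in> {a,b}} = {}" using I2_none False by simp
    ultimately show ?thesis by (simp only: prod.empty)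
  next
    case True
    then have cP: "c \<in> ph ` P" using c_in[OF P] by simp
    have I2': "(\<Prod>\<epsilon>\<in>{\<epsilon>\<in>incS T' (ph ` P). pt (ph ` P) \<epsilon> \<in> {c}}. dq T' \<epsilon> (pt (ph ` P) \<epsilon>)) =
       ?g (K a b P) * ?g (K b a P)" by (rule I2'_prod[OF P cP])
    have gb: "?g (K b a P) = (\<Prod>\<epsilon>\<in>K b a P. dq T \<epsilon> b)" using G2' by (intro prod.cong) auto
    show ?thesis
    proof (cases "a \<in> P \<and> b \<in> P")
      case True
      have ga: "?g (K a b P) = (\<Prod>\<epsilon>\<in>K a b P. dq T \<epsilon> a)"
        using Ka_lemma[OF p(1)] cond p True P_def by metis
      show ?thesis using I2' I2_both True ga gb by simp
    next
      case False
      show ?thesis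
      proof (cases "a \<in> P")
        case aP: True
        with False have bP: "b \<notin> P" by simp
        have ag: "agood T T' a b c"
        proof (rule ccontr)
          assume "\<not> agood T T' a b c"
          then have v: "val T a = 2" "a \<noteq> hd p" "a \<noteq> last p" using cond p by auto
          have aP': "a \<in> set p" using aP P_def by simp
          have v1: "valency (dE T) a = 2" using v(1) unfolding val_def .
          have "{a,b} \<subseteq> set p" by (rule t.path_val2[OF p(1) v(2) v(3) aP' v1 eab]) simp
          then show False using bP P_def by simp
        qed
        have ga: "?g (K a b P) = (\<Prod>\<epsilon>\<in>K a b P. dq T \<epsilon> a)"
          using Ka_lemma[OF p(1)] ag P_def by metis
        have Kb: "K b a P = Ed T b a" using K_all[OF p(1), of a b] aP bP P_def by simp
        have "?g (K b a P) = dq T {a,b} a" using ag Kb unfolding agood_def by simp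
        moreover have "(\<Prod>\<epsilon>\<in>{\<epsilon>\<in>incS T P. pt P \<epsilon> \<in> {a,b}}. dq T \<epsilon> (pt P \<epsilon>)) = dq T {a,b} a * (\<Prod>\<epsilon>\<in>K a b P. dq T \<epsilon> a)"
          using I2_one[of a b P] aP bP by simp
        ultimately show ?thesis using I2' ga by simp
      next
        case aP: False
        then have bP: "b \<in> P" using True by simp
        have ba: "{b,a} = {a,b}" by (simp add: insert_commute)
        have Ka: "K a b P = Ed T a b" using K_all[OF p(1) ba] aP bP P_def by simp
        have "?g (K a b P) = dq T {a,b} b"
        proof (cases "val T b = 1")
          case True
          have bP': "b \<in> set p" using bP P_def by simp
          have v1: "valency (dE T) b = 1" using True unfolding val_def .
          have "{a,b} \<subseteq> set p" by (rule t.path_val1[OF p(1) hl bP' v1 eab]) simp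
          then show ?thesis using aP P_def by simp
        next
          case False
          then show ?thesis using G3 Ka by simp
        qed
        moreover have "(\<Prod>\<epsilon>\<in>{\<epsilon>\<in>incS T P. pt P \<epsilon> \<in> {a,b}}. dq T \<epsilon> (pt P \<epsilon>)) = dq T {a,b} b * (\<Prod>\<epsilon>\<in>K b a P. dq T \<epsilon> b)"
          using I2_one[OF ba] aP bP by simp
        ultimately show ?thesis using I2' gb by simp
      qed
    qed
  qed
  show ?thesis unfolding P' using L R I1 I2 P_def p_def by simp
qed

lemma xx_main:
  assumes x: "x \<in> cells T" and y: "y \<in> cells T" and xy: "ph x \<noteq> ph y"
    and cond: "agood T T' a b c \<or> (val T a = 2 \<and> x \<noteq> a \<and> y \<noteq> a)"
    and f: "df T' (ph y) = df T y"
  shows "xx T' (ph x) (ph y) = xx T x y"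
proof -
  have x': "ph x \<in> cells T'" and y': "ph y \<in> cells T'" using x y cellsT' by auto
  show ?thesis using xx_alt[OF dT x y] xx_alt[OF dT' x' y'] prod_main[OF x y xy cond] f by simp
qed

end

context contr
begin

lemma VA_disj: "dV T \<inter> dA T = {}" using dT unfolding decorated_tree_def by simp

lemma touch_c: "\<epsilon> \<in> dE T - {{a,b}} \<Longrightarrow> c \<in> ph ` \<epsilon> \<longleftrightarrow> (a \<in> \<epsilon> \<or> b \<in> \<epsilon>)"
proof
  assume e: "\<epsilon> \<in> dE T - {{a,b}}" and "c \<in> ph ` \<epsilon>"
  then obtain s where s: "s \<in> \<epsilon>" "c = ph s" by blast
  have sc: "s \<in> cells T" using t.edge_sub e s by auto
  show "a \<in> \<epsilon> \<or> b \<in> \<epsilon>"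
  proof (rule ccontr)
    assume "\<not> (a \<in> \<epsilon> \<or> b \<in> \<epsilon>)"
    then have "s \<noteq> a" "s \<noteq> b" using s by auto
    then show False using s c_ne[OF sc] ph_other by auto
  qed
next
  assume "a \<in> \<epsilon> \<or> b \<in> \<epsilon>" then show "c \<in> ph ` \<epsilon>" by (metis image_eqI ph_a ph_b)
qed

lemma touch_z: "\<epsilon> \<in> dE T - {{a,b}} \<Longrightarrow> z \<in> cells T \<Longrightarrow> z \<notin> {a,b} \<Longrightarrow> z \<in> ph ` \<epsilon> \<longleftrightarrow> z \<in> \<epsilon>"
proof
  assume e: "\<epsilon> \<in> dE T - {{a,b}}" and z: "z \<in> cells T" "z \<notin> {a,b}" and "z \<in> ph ` \<epsilon>"
  then obtain s where s: "s \<in> \<epsilon>" "z = ph s" by blast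
  show "z \<in> \<epsilon>"
  proof (cases "s \<in> {a,b}")
    case True then have "z = c" using s by auto
    then show ?thesis using c_ne z by auto
  next
    case False then show ?thesis using s ph_other by auto
  qed
next
  assume "z \<notin> {a,b}" "z \<in> \<epsilon>" then show "z \<in> ph ` \<epsilon>" using ph_other by (metis image_eqI insertCI)
qed

lemma val_other: "z \<in> cells T \<Longrightarrow> z \<notin> {a,b} \<Longrightarrow> val T' z = val T z"
proof -
  assume z: "z \<in> cells T" "z \<notin> {a,b}"
  have sub: "{\<epsilon> \<in> dE T. z \<in> \<epsilon>} \<subseteq> dE T - {{a,b}}" using z by auto
  have "{\<epsilon>' \<in> dE T'. z \<in> \<epsilon>'} = image ph ` {\<epsilon> \<in> dE T. z \<in> \<epsilon>}"
  proof
    show "{\<epsilon>' \<in> dE T'. z \<in> \<epsilon>'} \<subseteq> image ph ` {\<epsilon> \<in> dE T. z \<in> \<epsilon>}"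
    proof
      fix \<epsilon>' assume e': "\<epsilon>' \<in> {\<epsilon>' \<in> dE T'. z \<in> \<epsilon>'}"
      then obtain \<epsilon> where e: "\<epsilon> \<in> dE T - {{a,b}}" "\<epsilon>' = ph ` \<epsilon>" unfolding ET' by blast
      then have "z \<in> \<epsilon>" using touch_z[OF e(1) z] e' by simp
      then show "\<epsilon>' \<in> image ph ` {\<epsilon> \<in> dE T. z \<in> \<epsilon>}" using e by blast
    qed
  next
    show "image ph ` {\<epsilon> \<in> dE T. z \<in> \<epsilon>} \<subseteq> {\<epsilon>' \<in> dE T'. z \<in> \<epsilon>'}"
    proof
      fix \<epsilon>' assume "\<epsilon>' \<in> image ph ` {\<epsilon> \<in> dE T. z \<in> \<epsilon>}"
      then obtain \<epsilon> where e: "\<epsilon> \<in> dE T" "z \<in> \<epsilon>" "\<epsilon>' = ph ` \<epsilon>" by blast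
      have e2: "\<epsilon> \<in> dE T - {{a,b}}" using e z by auto
      have "\<epsilon>' \<in> dE T'" unfolding ET' using e2 e(3) by blast
      moreover have "z \<in> \<epsilon>'" using touch_z[OF e2 z] e by simp
      ultimately show "\<epsilon>' \<in> {\<epsilon>' \<in> dE T'. z \<in> \<epsilon>'}" by simp
    qed
  qed
  moreover have "inj_on (image ph) {\<epsilon> \<in> dE T. z \<in> \<epsilon>}" using inj_on_subset[OF inj_E sub] .
  ultimately show ?thesis unfolding val_def valency_def by (simp add: card_image)
qed

lemma card_Ed: "s \<in> {a,b} \<Longrightarrow> {s,oo} = {a,b} \<Longrightarrow> val T s = card (Ed T s oo) + 1"
proof -
  assume s: "s \<in> {a,b}" and so: "{s,oo} = {a,b}"
  have "{\<epsilon> \<in> dE T. s \<in> \<epsilon>} = insert {a,b} (Ed T s oo)" using s so eab unfolding Ed_def by auto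
  moreover have "{a,b} \<notin> Ed T s oo" using so unfolding Ed_def by auto
  ultimately show ?thesis unfolding val_def valency_def using Ed_fin by simp
qed

lemma val_c: "int (val T' c) = int (val T a) + int (val T b) - 2"
proof -
  have "{\<epsilon>' \<in> dE T'. c \<in> \<epsilon>'} = image ph ` (Ed T a b \<union> Ed T b a)"
  proof
    show "{\<epsilon>' \<in> dE T'. c \<in> \<epsilon>'} \<subseteq> image ph ` (Ed T a b \<union> Ed T b a)"
    proof
      fix \<epsilon>' assume e': "\<epsilon>' \<in> {\<epsilon>' \<in> dE T'. c \<in> \<epsilon>'}"
      then obtain \<epsilon> where e: "\<epsilon> \<in> dE T - {{a,b}}" "\<epsilon>' = ph ` \<epsilon>" unfolding ET' by blast
      then have "a \<in> \<epsilon> \<or> b \<in> \<epsilon>" using touch_c[OF e(1)] e' by simp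
      then have "\<epsilon> \<in> Ed T a b \<union> Ed T b a" using e(1) unfolding Ed_def by (auto simp: insert_commute)
      then show "\<epsilon>' \<in> image ph ` (Ed T a b \<union> Ed T b a)" using e by blast
    qed
  next
    show "image ph ` (Ed T a b \<union> Ed T b a) \<subseteq> {\<epsilon>' \<in> dE T'. c \<in> \<epsilon>'}"
    proof
      fix \<epsilon>' assume "\<epsilon>' \<in> image ph ` (Ed T a b \<union> Ed T b a)"
      then obtain \<epsilon> where e: "\<epsilon> \<in> Ed T a b \<union> Ed T b a" "\<epsilon>' = ph ` \<epsilon>" by blast
      have e2: "\<epsilon> \<in> dE T - {{a,b}}" using e Ed_sub by blast
      have "a \<in> \<epsilon> \<or> b \<in> \<epsilon>" using e unfolding Ed_def by auto
      then have "c \<in> \<epsilon>'" using touch_c[OF e2] e by simp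
      moreover have "\<epsilon>' \<in> dE T'" unfolding ET' using e2 e(2) by blast
      ultimately show "\<epsilon>' \<in> {\<epsilon>' \<in> dE T'. c \<in> \<epsilon>'}" by simp
    qed
  qed
  moreover have "inj_on (image ph) (Ed T a b \<union> Ed T b a)" using inj_on_subset[OF inj_E Ed_sub] .
  ultimately have "val T' c = card (Ed T a b \<union> Ed T b a)" unfolding val_def valency_def by (simp add: card_image)
  also have "\<dots> = card (Ed T a b) + card (Ed T b a)" using Ed_disj Ed_fin by (simp add: card_Un_disjoint)
  finally show ?thesis using card_Ed[of a b] card_Ed[of b a] by (simp add: insert_commute)
qed

lemma NN_main:
  assumes xc: "x \<in> cells T" and xA: "x \<notin> dA T - A0 T"
    and AA: "dA T' - A0 T' = dA T - A0 T"
    and Ar: "\<forall>y\<in>dA T - A0 T. ph y = y"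
    and Af: "\<forall>y\<in>dA T - A0 T. df T' y = df T y"
    and cond: "(agood T T' a b c \<and> b \<notin> dA T - A0 T) \<or> x \<noteq> a"
  shows "NN T' (ph x) = NN T x"
proof -
  have "xx T' (ph x) y = xx T x y" if y: "y \<in> dA T - A0 T" for y
  proof -
    have yc: "y \<in> cells T" using y by (simp add: cells_def)
    have ya: "y \<noteq> a" using y aV VA_disj by auto
    have py: "ph y = y" using Ar y by simp
    have xy: "ph x \<noteq> ph y"
    proof (cases "x \<in> {a,b}")
      case False then show ?thesis using py ph_other xA y by auto
    next
      case True
      then have pxc: "ph x = c" by auto
      show ?thesis
      proof
        assume "ph x = ph y"
        then have yc': "y = c" using pxc py by simp
        then have "y \<in> {a,b}" using c_ne yc by auto
        then have yb: "y = b" using ya by simp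
        then have "x = a" using True xA y by auto
        then show False using cond y yb by auto
      qed
    qed
    have cnd: "agood T T' a b c \<or> (val T a = 2 \<and> x \<noteq> a \<and> y \<noteq> a)" using cond AG ya by auto
    have "xx T' (ph x) (ph y) = xx T x y" using xx_main[OF xc yc xy cnd] Af y py by simp
    then show ?thesis using py by simp
  qed
  then show ?thesis unfolding NN_def AA by simp
qed

lemma M_main:
  assumes AA: "dA T' - A0 T' = dA T - A0 T"
    and Ar: "\<forall>y\<in>dA T - A0 T. ph y = y"
    and Af: "\<forall>y\<in>dA T - A0 T. df T' y = df T y"
    and S': "dV T' \<union> A0 T' = ph ` (dV T \<union> A0 T - {a})"
    and Mc: "val T a = 2 \<or> (agood T T' a b c \<and> b \<in> dV T \<union> A0 T)"
  shows "MM T' = MM T"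
proof -
  define S where "S = dV T \<union> A0 T"
  have Sc: "S \<subseteq> cells T" unfolding S_def cells_def A0_def by auto
  have SA: "\<And>z. z \<in> S \<Longrightarrow> z \<notin> dA T - A0 T" unfolding S_def using VA_disj by auto
  have aS: "a \<in> S" using aV S_def by simp
  have finS: "finite S" using t.fin0 Sc finite_subset by blast
  define h where "h = (\<lambda>z. NN T z * (int (val T z) - 2))"
  define h' where "h' = (\<lambda>z. NN T' z * (int (val T' z) - 2))"
  have inj: "inj_on ph (S - {a})"
  proof
    fix s t assume s: "s \<in> S - {a}" and t: "t \<in> S - {a}" and eq: "ph s = ph t"
    have sc: "s \<in> cells T" "t \<in> cells T" using s t Sc by auto
    show "s = t"
    proof (cases "s = b"; cases "t = b")
      assume "s \<noteq> b" "t \<noteq> b"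
      then show ?thesis using eq ph_other s t by auto
    next
      assume "s = b" "t \<noteq> b"
      then show ?thesis using eq ph_other c_ne[OF sc(2)] t by auto
    next
      assume "s \<noteq> b" "t = b"
      then show ?thesis using eq ph_other c_ne[OF sc(1)] s by auto
    qed simp
  qed
  have other: "h' (ph z) = h z" if z: "z \<in> S - {a,b}" for z
  proof -
    have zc: "z \<in> cells T" using z Sc by auto
    have "NN T' (ph z) = NN T z" using NN_main[OF zc SA[of z] AA Ar Af] z by auto
    moreover have "ph z = z" using z ph_other by auto
    moreover have "val T' z = val T z" using val_other[OF zc] z by auto
    ultimately show ?thesis unfolding h_def h'_def by simp
  qed
  have "MM T' = - (\<Sum>z\<in>ph ` (S - {a}). h' z)" unfolding MM_def h'_def S' S_def ..
  also have "\<dots> = - (\<Sum>z\<in>S - {a}. h' (ph z))" using sum.reindex[OF inj] by simp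
  finally have M': "MM T' = - (\<Sum>z\<in>S - {a}. h' (ph z))" .
  have M: "MM T = - (h a + (\<Sum>z\<in>S - {a}. h z))"
  proof -
    have M0: "MM T = - (\<Sum>z\<in>S. h z)" unfolding MM_def h_def S_def by simp
    then show ?thesis using sum.remove[OF finS aS, of h] by simp
  qed
  show ?thesis
  proof (cases "b \<in> S")
    case False
    then have va: "val T a = 2" using Mc S_def by auto
    have "(\<Sum>z\<in>S - {a}. h' (ph z)) = (\<Sum>z\<in>S - {a}. h z)" using other False by (intro sum.cong) auto
    moreover have "h a = 0" using va unfolding h_def by simp
    ultimately show ?thesis using M M' by simp
  next
    case True
    have bS: "b \<in> S - {a}" using True ab_neq by auto
    have fin2: "finite (S - {a})" using finS by simp
    have s1: "(\<Sum>z\<in>S - {a}. h' (ph z)) = h' (ph b) + (\<Sum>z\<in>S - {a} - {b}. h' (ph z))"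
      using sum.remove[OF fin2 bS, of "\<lambda>z. h' (ph z)"] by simp
    have s2: "(\<Sum>z\<in>S - {a}. h z) = h b + (\<Sum>z\<in>S - {a} - {b}. h z)"
      using sum.remove[OF fin2 bS, of h] by simp
    have s3: "(\<Sum>z\<in>S - {a} - {b}. h' (ph z)) = (\<Sum>z\<in>S - {a} - {b}. h z)"
      using other by (intro sum.cong) auto
    have bc: "b \<in> cells T" using b_cells .
    have Nb: "NN T' c = NN T b" using NN_main[OF bc SA[OF True] AA Ar Af] ab_neq by simp
    have vc: "int (val T' c) = int (val T a) + int (val T b) - 2" by (rule val_c)
    have key: "h' c = h a + h b"
    proof (cases "val T a = 2")
      case True
      then show ?thesis unfolding h_def h'_def using Nb vc by simp
    next
      case False
      then have ag: "agood T T' a b c" using Mc by simp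
      have ac: "a \<in> cells T" using a_cells .
      have Na: "NN T' c = NN T a" using NN_main[OF ac SA[OF aS] AA Ar Af] ag SA[OF True] by simp
      have e: "int (val T' c) - 2 = (int (val T a) - 2) + (int (val T b) - 2)" using vc by simp
      have "h' c = NN T a * ((int (val T a) - 2) + (int (val T b) - 2))" unfolding h'_def Na e ..
      also have "\<dots> = NN T a * (int (val T a) - 2) + NN T b * (int (val T b) - 2)"
        using Na Nb by (simp only: distrib_left)
      also have "\<dots> = h a + h b" unfolding h_def ..
      finally show ?thesis .
    qed
    show ?thesis using M M' s1 s2 s3 key by simp
  qed
qed

lemma F_main:
  assumes AA: "dA T' - A0 T' = dA T - A0 T"
    and Ar: "\<forall>y\<in>dA T - A0 T. ph y = y"
    and Af: "\<forall>y\<in>dA T - A0 T. df T' y = df T y"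
  shows "FF T' = FF T"
proof -
  have "Farrow T' \<beta> = Farrow T \<beta>" if b: "\<beta> \<in> dA T - A0 T" for \<beta>
  proof -
    have bA: "\<beta> \<in> dA T" using b by simp
    have bA': "\<beta> \<in> dA T'" using b AA by auto
    have bc: "\<beta> \<in> cells T" using bA by (simp add: cells_def)
    have "xx T' \<beta> \<gamma> = xx T \<beta> \<gamma>" if g: "\<gamma> \<in> dA T - A0 T - {\<beta>}" for \<gamma>
    proof -
      have gc: "\<gamma> \<in> cells T" using g by (simp add: cells_def)
      have pb: "ph \<beta> = \<beta>" "ph \<gamma> = \<gamma>" using Ar b g by auto
      have ne: "ph \<beta> \<noteq> ph \<gamma>" using pb g by auto
      have na: "\<beta> \<noteq> a" "\<gamma> \<noteq> a" using b g aV VA_disj by auto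
      have cnd: "agood T T' a b c \<or> (val T a = 2 \<and> \<beta> \<noteq> a \<and> \<gamma> \<noteq> a)" using AG na by auto
      show ?thesis using xx_main[OF bc gc ne cnd] pb Af g by simp
    qed
    then have "pp T' \<beta> (arrow_edge T' \<beta>) = pp T \<beta> (arrow_edge T \<beta>)"
      using pp_arrow[OF dT bA] pp_arrow[OF dT' bA'] AA by simp
    then show ?thesis unfolding Farrow_def using Af b by simp
  qed
  then show ?thesis unfolding FF_def AA by simp
qed

end

lemma dt_disj: "decorated_tree T \<Longrightarrow> dV T \<inter> dA T = {}" unfolding decorated_tree_def by simp

lemma dt_arrow_val: "decorated_tree T \<Longrightarrow> \<alpha> \<in> dA T \<Longrightarrow> val T \<alpha> = 1"
  unfolding decorated_tree_def by blast

lemma only_edge: "decorated_tree T \<Longrightarrow> val T z = 1 \<Longrightarrow> {v,z} \<in> dE T \<Longrightarrow> \<epsilon> \<in> dE T \<Longrightarrow> z \<in> \<epsilon> \<Longrightarrow> \<epsilon> = {v,z}"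
  using tree.val1_edge[OF dt_tree] unfolding val_def by (metis insertCI)

lemma leaf_case:
  assumes dT: "decorated_tree T" and dT': "decorated_tree T'"
    and e: "{v,z} \<in> dE T" and vV: "v \<in> dV T" and vz1: "val T z = 1" and q1: "dq T {v,z} v = 1"
    and cells': "cells T' = cells T - {z}"
    and E': "dE T' = dE T - {{v,z}}"
    and kq: "keeps_q_on (dE T') T T'"
    and AA: "dA T' - A0 T' = dA T - A0 T"
    and Ar: "z \<notin> dA T - A0 T"
    and Af: "keeps_f T T'"
    and S': "dV T' \<union> A0 T' = dV T \<union> A0 T - {z}"
    and zS: "z \<in> dV T \<union> A0 T"
  shows "MM T = MM T' \<and> FF T = FF T'"
proof -
  let ?ph = "phi v z v"
  have vz: "v \<noteq> z" using tree.edge_neq[OF dt_tree[OF dT] e] .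
  have zc: "z \<in> cells T" "v \<in> cells T" using tree.edge_sub[OF dt_tree[OF dT] e] by auto
  have ph: "?ph w = (if w = z then v else w)" for w by (simp add: phi_def)
  have noz: "z \<notin> \<epsilon>" if "\<epsilon> \<in> dE T - {{v,z}}" for \<epsilon> using only_edge[OF dT vz1 e] that by blast
  have phe: "?ph ` \<epsilon> = \<epsilon>" if "\<epsilon> \<in> dE T - {{v,z}}" for \<epsilon>
  proof -
    have "\<forall>w\<in>\<epsilon>. ?ph w = w" using noz[OF that] ph by auto
    then show ?thesis by simp
  qed
  have imgE: "image ?ph ` (dE T - {{v,z}}) = dE T - {{v,z}}"
  proof -
    have "image ?ph ` (dE T - {{v,z}}) = id ` (dE T - {{v,z}})" using phe by (intro image_cong) auto
    then show ?thesis by simp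
  qed
  have imgC: "?ph ` cells T = cells T - {z}"
  proof
    show "?ph ` cells T \<subseteq> cells T - {z}" using ph zc vz by auto
  next
    show "cells T - {z} \<subseteq> ?ph ` cells T"
    proof
      fix w assume "w \<in> cells T - {z}"
      then show "w \<in> ?ph ` cells T" using ph by (metis DiffD1 DiffD2 image_eqI singletonI)
    qed
  qed
  have vA: "v \<notin> dA T" using dt_disj[OF dT] vV by auto
  have ag: "agood T T' v z v"
  proof -
    have "Ed T z v = {}" unfolding Ed_def using only_edge[OF dT vz1 e] by (auto simp: insert_commute)
    moreover have "\<forall>\<epsilon>\<in>Ed T v z. dq T' (?ph ` \<epsilon>) v = dq T \<epsilon> v"
    proof
      fix \<epsilon> assume "\<epsilon> \<in> Ed T v z"
      then have "\<epsilon> \<in> dE T - {{v,z}}" "v \<in> \<epsilon>" unfolding Ed_def by auto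
      then show "dq T' (?ph ` \<epsilon>) v = dq T \<epsilon> v" using phe kq E' unfolding keeps_q_on_def by auto
    qed
    ultimately show "agood T T' v z v" unfolding agood_def using q1 by simp
  qed
  interpret contr T T' v z v
  proof
    show "decorated_tree T" "decorated_tree T'" "{v,z} \<in> dE T" "v \<in> dV T" by (fact dT dT' e vV)+
    show "v \<notin> cells T - {v,z}" by simp
    show "cells T' = ?ph ` cells T" using imgC cells' by simp
    show "dE T' = image ?ph ` (dE T - {{v,z}})" using imgE E' by simp
    show "\<forall>\<epsilon>\<in>dE T - {{v,z}}. \<forall>w\<in>\<epsilon>. w \<notin> {v,z} \<longrightarrow> dq T' (?ph ` \<epsilon>) w = dq T \<epsilon> w"
      using phe kq E' unfolding keeps_q_on_def by auto
    show "\<forall>\<epsilon>\<in>dE T - {{v,z}}. z \<in> \<epsilon> \<longrightarrow> dq T' (?ph ` \<epsilon>) v = dq T \<epsilon> z" using noz by blast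
    show "val T z = 1 \<or> (\<Prod>\<epsilon>\<in>Ed T v z. dq T' (?ph ` \<epsilon>) v) = dq T {v,z} z" using vz1 by simp
    show "agood T T' v z v \<or> val T v = 2" using ag by simp
  qed
  have Ar': "\<forall>y\<in>dA T - A0 T. ?ph y = y" using Ar ph by auto
  have Af': "\<forall>y\<in>dA T - A0 T. df T' y = df T y" using Af AA unfolding keeps_f_def by auto
  have S'': "dV T' \<union> A0 T' = ?ph ` (dV T \<union> A0 T - {v})"
  proof -
    have "?ph ` (dV T \<union> A0 T - {v}) = dV T \<union> A0 T - {z}"
    proof
      show "?ph ` (dV T \<union> A0 T - {v}) \<subseteq> dV T \<union> A0 T - {z}"
      proof
        fix w' assume "w' \<in> ?ph ` (dV T \<union> A0 T - {v})"
        then obtain w where w: "w \<in> dV T \<union> A0 T - {v}" "w' = ?ph w" by blast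
        show "w' \<in> dV T \<union> A0 T - {z}"
        proof (cases "w = z")
          case True then have "w' = v" using w ph by simp
          then show ?thesis using vV vz by simp
        next
          case False then have "w' = w" using w ph by simp
          then show ?thesis using w False by simp
        qed
      qed
    next
      show "dV T \<union> A0 T - {z} \<subseteq> ?ph ` (dV T \<union> A0 T - {v})"
      proof
        fix w assume w: "w \<in> dV T \<union> A0 T - {z}"
        show "w \<in> ?ph ` (dV T \<union> A0 T - {v})"
        proof (cases "w = v")
          case True
          have "?ph z = v" using ph by simp
          moreover have "z \<in> dV T \<union> A0 T - {v}" using zS vz by simp
          ultimately show ?thesis using True by (metis image_eqI)
        next
          case False
          have "?ph w = w" using ph w by simp
          moreover have "w \<in> dV T \<union> A0 T - {v}" using w False by simp
          ultimately show ?thesis by (metis image_eqI)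
        qed
      qed
    qed
    then show ?thesis using S' by simp
  qed
  have "MM T' = MM T" by (rule M_main[OF AA Ar' Af' S'']) (use zS ag in simp)
  moreover have "FF T' = FF T" by (rule F_main[OF AA Ar' Af'])
  ultimately show ?thesis by simp
qed

lemma opa_main:
  assumes dT: "decorated_tree T" and dT': "decorated_tree T'" and op: "op_a T T'"
  shows "MM T = MM T' \<and> FF T = FF T'"
proof -
  obtain v \<alpha> where o: "v \<in> dV T" "\<alpha> \<in> A0 T" "{v, \<alpha>} \<in> dE T" "dq T {v, \<alpha>} v = 1"
      "dV T' = dV T" "dA T' = dA T - {\<alpha>}" "dE T' = dE T - {{v, \<alpha>}}"
      "keeps_f T T'" "keeps_q_on (dE T') T T'"
    using op unfolding op_a_def apply (elim exE conjE) apply (rule that) by assumption+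
  have aA: "\<alpha> \<in> dA T" using o(2) unfolding A0_def by simp
  have aV: "\<alpha> \<notin> dV T" using aA dt_disj[OF dT] by auto
  have A0': "A0 T' = A0 T - {\<alpha>}"
    using o(6,8) unfolding A0_def keeps_f_def by auto
  show ?thesis
  proof (rule leaf_case[OF dT dT' o(3) o(1) dt_arrow_val[OF dT aA] o(4) _ o(7) o(9) _ _ o(8)])
    show "cells T' = cells T - {\<alpha>}" unfolding cells_def using o(5,6) aV by auto
    show "dA T' - A0 T' = dA T - A0 T" using A0' o(6) o(2) by auto
    show "\<alpha> \<notin> dA T - A0 T" using o(2) by simp
    show "dV T' \<union> A0 T' = dV T \<union> A0 T - {\<alpha>}" using A0' o(5) aV by auto
    show "\<alpha> \<in> dV T \<union> A0 T" using o(2) by simp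
  qed
qed

lemma opb_main:
  assumes dT: "decorated_tree T" and dT': "decorated_tree T'" and op: "op_b T T'"
  shows "MM T = MM T' \<and> FF T = FF T'"
proof -
  obtain v t where o: "v \<in> dV T" "t \<in> dV T" "{v, t} \<in> dE T" "val T t = 1" "dq T {v, t} v = 1"
      "dV T' = dV T - {t}" "dA T' = dA T" "dE T' = dE T - {{v, t}}"
      "keeps_f T T'" "keeps_q_on (dE T') T T'"
    using op unfolding op_b_def apply (elim exE conjE) apply (rule that) by assumption+
  have tA: "t \<notin> dA T" using o(2) dt_disj[OF dT] by auto
  have A0': "A0 T' = A0 T"
    using o(7,9) unfolding A0_def keeps_f_def by auto
  have tA0: "t \<notin> A0 T" using tA unfolding A0_def by simp
  show ?thesis
  proof (rule leaf_case[OF dT dT' o(3) o(1) o(4) o(5) _ o(8) o(10) _ _ o(9)])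
    show "cells T' = cells T - {t}" unfolding cells_def using o(6,7) tA by auto
    show "dA T' - A0 T' = dA T - A0 T" using A0' o(7) by auto
    show "t \<notin> dA T - A0 T" using tA by simp
    show "dV T' \<union> A0 T' = dV T \<union> A0 T - {t}" using A0' o(6) tA0 by auto
    show "t \<in> dV T \<union> A0 T" using o(2) by simp
  qed
qed

lemma img_id: "(\<And>w. w \<in> A \<Longrightarrow> f w = w) \<Longrightarrow> f ` A = A"
  by (simp add: image_cong[of A A f id])

lemma opc_main:
  assumes dT: "decorated_tree T" and dT': "decorated_tree T'" and op: "op_c T T'"
  shows "MM T = MM T' \<and> FF T = FF T'"
proof -
  obtain v u1 u2 where o: "v \<in> dV T" "val T v = 2" "{u1, v} \<in> dE T" "{v, u2} \<in> dE T" "u1 \<noteq> u2"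
      "dV T' = dV T - {v}" "dA T' = dA T"
      "dE T' = (dE T - {{u1, v}, {v, u2}}) \<union> {{u1, u2}}"
      "keeps_f T T'" "keeps_q_on (dE T - {{u1, v}, {v, u2}}) T T'"
      "dq T' {u1, u2} u1 = dq T {u1, v} u1" "dq T' {u1, u2} u2 = dq T {v, u2} u2"
    using op unfolding op_c_def apply (elim exE conjE) apply (rule that) by assumption+
  interpret t: tree "cells T" "dE T" using dt_tree[OF dT] .
  let ?ph = "phi v u1 u1"
  have ph: "?ph w = (if w = v then u1 else w)" for w by (simp add: phi_def)
  have e1: "{v,u1} \<in> dE T" using o(3) by (simp add: insert_commute)
  have vu1: "v \<noteq> u1" using t.edge_neq[OF e1] .
  have vu2: "v \<noteq> u2" using t.edge_neq[OF o(4)] .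
  have e12: "{v,u1} \<noteq> {v,u2}" using o(5) by (metis doubleton_eq_iff)
  have e1': "{u1,v} = {v,u1}" by (simp add: insert_commute)
  have atv: "\<epsilon> = {v,u1} \<or> \<epsilon> = {v,u2}" if "\<epsilon> \<in> dE T" "v \<in> \<epsilon>" for \<epsilon>
    using t.val2_edge[of v "{v,u1}" "{v,u2}" \<epsilon>] o(2) e1 o(4) e12 that unfolding val_def by simp
  have novE: "v \<notin> \<epsilon>" if "\<epsilon> \<in> dE T - {{v,u1},{v,u2}}" for \<epsilon> using atv that by blast
  have phe: "?ph ` \<epsilon> = \<epsilon>" if "\<epsilon> \<in> dE T - {{v,u1},{v,u2}}" for \<epsilon>
    using img_id[of \<epsilon> ?ph] novE[OF that] ph by metis
  have phe2: "?ph ` {v,u2} = {u1,u2}" using ph vu2 by (simp add: insert_commute)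
  have u1e2: "u1 \<notin> {v,u2}" using vu1 o(5) by simp
  have u1c: "u1 \<in> cells T" "v \<in> cells T" using t.edge_sub[OF e1] by auto
  have vA: "v \<notin> dA T" using o(1) dt_disj[OF dT] by auto
  have kq: "\<And>\<epsilon> w. \<epsilon> \<in> dE T - {{v,u1},{v,u2}} \<Longrightarrow> w \<in> \<epsilon> \<Longrightarrow> dq T' \<epsilon> w = dq T \<epsilon> w"
    using o(10) e1' unfolding keeps_q_on_def by auto
  have EdT: "Ed T v u1 = {{v,u2}}"
  proof
    show "Ed T v u1 \<subseteq> {{v,u2}}" unfolding Ed_def using atv by auto
    show "{{v,u2}} \<subseteq> Ed T v u1" unfolding Ed_def using o(4) e12 by auto
  qed
  have imgC: "?ph ` cells T = cells T - {v}"
  proof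
    show "?ph ` cells T \<subseteq> cells T - {v}"
    proof
      fix w' assume "w' \<in> ?ph ` cells T"
      then obtain w where w: "w \<in> cells T" "w' = ?ph w" by blast
      then show "w' \<in> cells T - {v}" using ph u1c vu1 by (cases "w = v") auto
    qed
  next
    show "cells T - {v} \<subseteq> ?ph ` cells T"
    proof
      fix w assume w: "w \<in> cells T - {v}"
      then have "?ph w = w" using ph by simp
      then show "w \<in> ?ph ` cells T" using w by (metis DiffD1 image_eqI)
    qed
  qed
  have imgE: "image ?ph ` (dE T - {{v,u1}}) = (dE T - {{u1, v}, {v, u2}}) \<union> {{u1, u2}}"
  proof -
    have "dE T - {{v,u1}} = insert {v,u2} (dE T - {{v,u1},{v,u2}})" using o(4) e12 by auto
    then have "image ?ph ` (dE T - {{v,u1}}) = insert (?ph ` {v,u2}) (image ?ph ` (dE T - {{v,u1},{v,u2}}))"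
      by simp
    also have "image ?ph ` (dE T - {{v,u1},{v,u2}}) = dE T - {{v,u1},{v,u2}}"
      using img_id[of "dE T - {{v,u1},{v,u2}}" "image ?ph"] phe by blast
    finally show ?thesis using phe2 e1' by auto
  qed
  interpret contr T T' v u1 u1
  proof
    show "decorated_tree T" "decorated_tree T'" "{v,u1} \<in> dE T" "v \<in> dV T" by (fact dT dT' e1 o(1))+
    show "u1 \<notin> cells T - {v,u1}" by simp
    show "cells T' = ?ph ` cells T" using imgC o(6,7) vA unfolding cells_def by auto
    show "dE T' = image ?ph ` (dE T - {{v,u1}})" using imgE o(8) by simp
    show "\<forall>\<epsilon>\<in>dE T - {{v,u1}}. \<forall>w\<in>\<epsilon>. w \<notin> {v,u1} \<longrightarrow> dq T' (?ph ` \<epsilon>) w = dq T \<epsilon> w"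
    proof (intro ballI impI)
      fix \<epsilon> w assume e: "\<epsilon> \<in> dE T - {{v,u1}}" and w: "w \<in> \<epsilon>" "w \<notin> {v,u1}"
      show "dq T' (?ph ` \<epsilon>) w = dq T \<epsilon> w"
      proof (cases "\<epsilon> = {v,u2}")
        case True
        then have "w = u2" using w by auto
        then show ?thesis using True phe2 o(12) by simp
      next
        case False
        then have e': "\<epsilon> \<in> dE T - {{v,u1},{v,u2}}" using e by auto
        then show ?thesis using phe[OF e'] kq[OF e' w(1)] by simp
      qed
    qed
    show "\<forall>\<epsilon>\<in>dE T - {{v,u1}}. u1 \<in> \<epsilon> \<longrightarrow> dq T' (?ph ` \<epsilon>) u1 = dq T \<epsilon> u1"
    proof (intro ballI impI)
      fix \<epsilon> assume e: "\<epsilon> \<in> dE T - {{v,u1}}" and u: "u1 \<in> \<epsilon>"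
      then have e': "\<epsilon> \<in> dE T - {{v,u1},{v,u2}}" using u1e2 by auto
      then show "dq T' (?ph ` \<epsilon>) u1 = dq T \<epsilon> u1" using phe[OF e'] kq[OF e' u] by simp
    qed
    show "val T u1 = 1 \<or> (\<Prod>\<epsilon>\<in>Ed T v u1. dq T' (?ph ` \<epsilon>) u1) = dq T {v,u1} u1"
      using EdT phe2 o(11) e1' by simp
    show "agood T T' v u1 u1 \<or> val T v = 2" using o(2) by simp
  qed
  have A0': "A0 T' = A0 T" using o(7,9) unfolding A0_def keeps_f_def by auto
  have AA: "dA T' - A0 T' = dA T - A0 T" using A0' o(7) by simp
  have Ar: "\<forall>y\<in>dA T - A0 T. ?ph y = y" using vA ph by auto
  have Af: "\<forall>y\<in>dA T - A0 T. df T' y = df T y" using o(7,9) unfolding keeps_f_def by auto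
  have S': "dV T' \<union> A0 T' = ?ph ` (dV T \<union> A0 T - {v})"
  proof -
    have "?ph ` (dV T \<union> A0 T - {v}) = dV T \<union> A0 T - {v}" by (rule img_id) (simp add: ph)
    moreover have "v \<notin> A0 T" using vA unfolding A0_def by simp
    ultimately show ?thesis using A0' o(6) by auto
  qed
  have "MM T' = MM T" by (rule M_main[OF AA Ar Af S']) (use o(2) in simp)
  moreover have "FF T' = FF T" by (rule F_main[OF AA Ar Af])
  ultimately show ?thesis by simp
qed

lemma opd_main:
  assumes dT: "decorated_tree T" and dT': "decorated_tree T'" and op: "op_d T T'"
  shows "MM T = MM T' \<and> FF T = FF T'"
proof -
  obtain v1 v2 v where o: "v1 \<in> dV T" "v2 \<in> dV T" "{v1, v2} \<in> dE T"
      "dq T {v1, v2} v1 = QQ T {v1, v2} v2" "dq T {v1, v2} v2 = QQ T {v1, v2} v1"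
      "v \<notin> cells T"
      "dV T' = (dV T - {v1, v2}) \<union> {v}" "dA T' = dA T"
      "dE T' = {\<epsilon> \<in> dE T. v1 \<notin> \<epsilon> \<and> v2 \<notin> \<epsilon>} \<union>
              {{x, v} | x. \<exists>w\<in>{v1, v2}. {x, w} \<in> dE T \<and> x \<notin> {v1, v2}}"
      "keeps_f T T'" "keeps_q_on {\<epsilon> \<in> dE T. v1 \<notin> \<epsilon> \<and> v2 \<notin> \<epsilon>} T T'"
      "\<forall>x w. w \<in> {v1, v2} \<longrightarrow> {x, w} \<in> dE T \<longrightarrow> x \<notin> {v1, v2} \<longrightarrow>
          dq T' {x, v} x = dq T {x, w} x \<and> dq T' {x, v} v = dq T {x, w} w"
    using op unfolding op_d_def apply (elim exE conjE) apply (rule that) by assumption+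
  interpret t: tree "cells T" "dE T" using dt_tree[OF dT] .
  let ?ph = "phi v1 v2 v"
  have ph: "?ph w = (if w = v1 \<or> w = v2 then v else w)" for w by (simp add: phi_def)
  have v12: "v1 \<noteq> v2" using t.edge_neq[OF o(3)] .
  have vA: "v1 \<notin> dA T" "v2 \<notin> dA T" using o(1,2) dt_disj[OF dT] by auto
  have vc: "v1 \<in> cells T" "v2 \<in> cells T" using o(1,2) by (auto simp: cells_def)
  have std: "\<exists>x w. \<epsilon> = {x,w} \<and> w \<in> {v1,v2} \<and> x \<notin> {v1,v2}"
    if e: "\<epsilon> \<in> dE T" "\<epsilon> \<noteq> {v1,v2}" "v1 \<in> \<epsilon> \<or> v2 \<in> \<epsilon>" for \<epsilon>
  proof -
    obtain u w where uw: "u \<noteq> w" "\<epsilon> = {u,w}" using t.edge_form[OF e(1)] by blast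
    show ?thesis
    proof (cases "u \<in> {v1,v2}")
      case True
      then have "w \<notin> {v1,v2}" using uw e(2) by auto
      then show ?thesis using True uw by (metis insert_commute)
    next
      case False
      then have "w \<in> {v1,v2}" using uw e(3) by auto
      then show ?thesis using False uw by blast
    qed
  qed
  have phu: "?ph ` \<epsilon> = \<epsilon>" if "v1 \<notin> \<epsilon>" "v2 \<notin> \<epsilon>" for \<epsilon>
    using img_id[of \<epsilon> ?ph] ph that by metis
  have pht: "?ph ` {x,w} = {x,v}" if "w \<in> {v1,v2}" "x \<notin> {v1,v2}" for x w
    using that ph by auto
  have clause: "dq T' {x, v} x = dq T {x, w} x \<and> dq T' {x, v} v = dq T {x, w} w"
    if "w \<in> {v1, v2}" "{x, w} \<in> dE T" "x \<notin> {v1, v2}" for x w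
    using o(12) that by blast
  have kq: "dq T' \<epsilon> z = dq T \<epsilon> z" if "\<epsilon> \<in> dE T" "v1 \<notin> \<epsilon>" "v2 \<notin> \<epsilon>" "z \<in> \<epsilon>" for \<epsilon> z
    using o(11) that unfolding keeps_q_on_def by auto
  have atw: "dq T' (?ph ` \<epsilon>) v = dq T \<epsilon> w" if ew: "\<epsilon> \<in> dE T" "\<epsilon> \<noteq> {v1,v2}" "w \<in> {v1,v2}" "w \<in> \<epsilon>" for \<epsilon> w
  proof -
    have "v1 \<in> \<epsilon> \<or> v2 \<in> \<epsilon>" using ew by auto
    then obtain x w' where xw: "\<epsilon> = {x,w'}" "w' \<in> {v1,v2}" "x \<notin> {v1,v2}" using std[OF ew(1,2)] by blast
    have "w' = w" using xw ew by auto
    then show ?thesis using pht[OF xw(2,3)] clause[OF xw(2) _ xw(3)] xw ew by simp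
  qed
  have Ed12: "Ed T v1 v2 = {e' \<in> dE T. v1 \<in> e' \<and> e' \<noteq> {v1,v2}}" unfolding Ed_def ..
  have Ed21: "Ed T v2 v1 = {e' \<in> dE T. v2 \<in> e' \<and> e' \<noteq> {v1,v2}}" unfolding Ed_def by (simp add: insert_commute)
  have P1: "(\<Prod>\<epsilon>\<in>Ed T v1 v2. dq T' (?ph ` \<epsilon>) v) = dq T {v1,v2} v2"
  proof -
    have "(\<Prod>\<epsilon>\<in>Ed T v1 v2. dq T' (?ph ` \<epsilon>) v) = (\<Prod>\<epsilon>\<in>Ed T v1 v2. dq T \<epsilon> v1)"
      using atw unfolding Ed12 by (intro prod.cong) auto
    then show ?thesis using o(5) unfolding QQ_def Ed12 by simp
  qed
  have P2: "(\<Prod>\<epsilon>\<in>Ed T v2 v1. dq T' (?ph ` \<epsilon>) v) = dq T {v1,v2} v1"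
  proof -
    have "(\<Prod>\<epsilon>\<in>Ed T v2 v1. dq T' (?ph ` \<epsilon>) v) = (\<Prod>\<epsilon>\<in>Ed T v2 v1. dq T \<epsilon> v2)"
      using atw unfolding Ed21 by (intro prod.cong) auto
    then show ?thesis using o(4) unfolding QQ_def Ed21 by simp
  qed
  have ag: "agood T T' v1 v2 v"
    unfolding agood_def using P2 atw unfolding Ed12 by auto
  have imgC: "?ph ` cells T = (cells T - {v1,v2}) \<union> {v}"
  proof
    show "?ph ` cells T \<subseteq> (cells T - {v1,v2}) \<union> {v}" using ph by auto
  next
    show "(cells T - {v1,v2}) \<union> {v} \<subseteq> ?ph ` cells T"
    proof
      fix w assume w: "w \<in> (cells T - {v1,v2}) \<union> {v}"
      show "w \<in> ?ph ` cells T"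
      proof (cases "w = v")
        case True then show ?thesis using vc(1) ph by (metis image_eqI)
      next
        case False then have "w \<in> cells T - {v1,v2}" using w by simp
        then show ?thesis using ph by (metis DiffD1 DiffD2 image_eqI insertCI)
      qed
    qed
  qed
  have imgE: "image ?ph ` (dE T - {{v1,v2}}) = dE T'"
  proof
    show "image ?ph ` (dE T - {{v1,v2}}) \<subseteq> dE T'"
    proof
      fix \<epsilon>' assume "\<epsilon>' \<in> image ?ph ` (dE T - {{v1,v2}})"
      then obtain \<epsilon> where e: "\<epsilon> \<in> dE T" "\<epsilon> \<noteq> {v1,v2}" "\<epsilon>' = ?ph ` \<epsilon>" by blast
      show "\<epsilon>' \<in> dE T'"
      proof (cases "v1 \<in> \<epsilon> \<or> v2 \<in> \<epsilon>")
        case False then show ?thesis using phu e unfolding o(9) by auto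
      next
        case True
        obtain x w where xw: "\<epsilon> = {x,w}" "w \<in> {v1,v2}" "x \<notin> {v1,v2}" using std e True by blast
        have "\<epsilon>' = {x,v}" using pht[OF xw(2,3)] xw e by simp
        then show ?thesis unfolding o(9) using xw e by blast
      qed
    qed
  next
    show "dE T' \<subseteq> image ?ph ` (dE T - {{v1,v2}})"
    proof
      fix \<epsilon>' assume "\<epsilon>' \<in> dE T'"
      then have "(\<epsilon>' \<in> dE T \<and> v1 \<notin> \<epsilon>' \<and> v2 \<notin> \<epsilon>') \<or>
          (\<exists>x w. \<epsilon>' = {x,v} \<and> w \<in> {v1,v2} \<and> {x,w} \<in> dE T \<and> x \<notin> {v1,v2})" unfolding o(9) by blast
      then show "\<epsilon>' \<in> image ?ph ` (dE T - {{v1,v2}})"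
      proof
        assume a: "\<epsilon>' \<in> dE T \<and> v1 \<notin> \<epsilon>' \<and> v2 \<notin> \<epsilon>'"
        then have "\<epsilon>' \<noteq> {v1,v2}" by auto
        then show ?thesis using a phu[of \<epsilon>'] by (metis DiffI image_eqI singletonD)
      next
        assume "\<exists>x w. \<epsilon>' = {x,v} \<and> w \<in> {v1,v2} \<and> {x,w} \<in> dE T \<and> x \<notin> {v1,v2}"
        then obtain x w where xw: "\<epsilon>' = {x,v}" "w \<in> {v1,v2}" "{x,w} \<in> dE T" "x \<notin> {v1,v2}" by blast
        have "{x,w} \<noteq> {v1,v2}" using xw by auto
        moreover have "?ph ` {x,w} = \<epsilon>'" using pht[OF xw(2,4)] xw by simp
        ultimately show ?thesis using xw(3) by (metis DiffI image_eqI singletonD)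
      qed
    qed
  qed
  interpret contr T T' v1 v2 v
  proof
    show "decorated_tree T" "decorated_tree T'" "{v1,v2} \<in> dE T" "v1 \<in> dV T" by (fact dT dT' o(3) o(1))+
    show "v \<notin> cells T - {v1,v2}" using o(6) by simp
    show "cells T' = ?ph ` cells T" using imgC o(7,8) vA unfolding cells_def by auto
    show "dE T' = image ?ph ` (dE T - {{v1,v2}})" using imgE by simp
    show "\<forall>\<epsilon>\<in>dE T - {{v1,v2}}. \<forall>w\<in>\<epsilon>. w \<notin> {v1,v2} \<longrightarrow> dq T' (?ph ` \<epsilon>) w = dq T \<epsilon> w"
    proof (intro ballI impI)
      fix \<epsilon> z assume e: "\<epsilon> \<in> dE T - {{v1,v2}}" and z: "z \<in> \<epsilon>" "z \<notin> {v1,v2}"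
      show "dq T' (?ph ` \<epsilon>) z = dq T \<epsilon> z"
      proof (cases "v1 \<in> \<epsilon> \<or> v2 \<in> \<epsilon>")
        case False then show ?thesis using phu kq e z by auto
      next
        case True
        obtain x w where xw: "\<epsilon> = {x,w}" "w \<in> {v1,v2}" "x \<notin> {v1,v2}" using std e True by blast
        have "z = x" using xw z by auto
        then show ?thesis using pht[OF xw(2,3)] clause[OF xw(2) _ xw(3)] xw e by simp
      qed
    qed
    show "\<forall>\<epsilon>\<in>dE T - {{v1,v2}}. v2 \<in> \<epsilon> \<longrightarrow> dq T' (?ph ` \<epsilon>) v = dq T \<epsilon> v2"
      using atw by auto
    show "val T v2 = 1 \<or> (\<Prod>\<epsilon>\<in>Ed T v1 v2. dq T' (?ph ` \<epsilon>) v) = dq T {v1,v2} v2" using P1 by simp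
    show "agood T T' v1 v2 v \<or> val T v1 = 2" using ag by simp
  qed
  have A0': "A0 T' = A0 T" using o(8,10) unfolding A0_def keeps_f_def by auto
  have AA: "dA T' - A0 T' = dA T - A0 T" using A0' o(8) by simp
  have Ar: "\<forall>y\<in>dA T - A0 T. ?ph y = y" using vA ph by auto
  have Af: "\<forall>y\<in>dA T - A0 T. df T' y = df T y" using o(8,10) unfolding keeps_f_def by auto
  have vA0: "v1 \<notin> A0 T" "v2 \<notin> A0 T" using vA unfolding A0_def by auto
  have S': "dV T' \<union> A0 T' = ?ph ` (dV T \<union> A0 T - {v1})"
  proof -
    have "?ph ` (dV T \<union> A0 T - {v1}) = (dV T \<union> A0 T - {v1,v2}) \<union> {v}"
    proof
      show "?ph ` (dV T \<union> A0 T - {v1}) \<subseteq> (dV T \<union> A0 T - {v1,v2}) \<union> {v}" using ph by auto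
    next
      show "(dV T \<union> A0 T - {v1,v2}) \<union> {v} \<subseteq> ?ph ` (dV T \<union> A0 T - {v1})"
      proof
        fix w assume w: "w \<in> (dV T \<union> A0 T - {v1,v2}) \<union> {v}"
        show "w \<in> ?ph ` (dV T \<union> A0 T - {v1})"
        proof (cases "w = v")
          case True
          have "v2 \<in> dV T \<union> A0 T - {v1}" using o(2) v12 by simp
          moreover have "?ph v2 = v" using ph by simp
          ultimately show ?thesis using True by (metis image_eqI)
        next
          case False
          then have w': "w \<in> dV T \<union> A0 T - {v1,v2}" using w by simp
          then have "?ph w = w" using ph by simp
          moreover have "w \<in> dV T \<union> A0 T - {v1}" using w' by simp
          ultimately show ?thesis by (metis image_eqI)
        qed
      qed
    qed
    then show ?thesis using A0' o(7) vA0 by auto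
  qed
  have "MM T' = MM T" by (rule M_main[OF AA Ar Af S']) (use ag o(2) in simp)
  moreover have "FF T' = FF T" by (rule F_main[OF AA Ar Af])
  ultimately show ?thesis by simp
qed

theorem lemma1p15:
  fixes T T' :: "'a dtree"
  assumes "decorated_tree T" and "decorated_tree T'"
    and "op_a T T' \<or> op_b T T' \<or> op_c T T' \<or> op_d T T'"
  shows "MM T = MM T' \<and> FF T = FF T'"
  using assms(3)
proof (elim disjE)
  assume "op_a T T'" then show ?thesis using opa_main[OF assms(1,2)] by simp
next
  assume "op_b T T'" then show ?thesis using opb_main[OF assms(1,2)] by simp
next
  assume "op_c T T'" then show ?thesis using opc_main[OF assms(1,2)] by simp
next
  assume "op_d T T'" then show ?thesis using opd_main[OF assms(1,2)] by simp
qed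

end
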